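(* Under the standing setup below (in particular, with $\mathcal C\subseteq\mathcal C_G$ a closed convex cone and $\mathcal S\subseteq\mathcal S_G$ a closed convex set satisfying $\overline{\mathcal T}=\{\Phi\in\mathcal C:\sum_{m}\Phi_m\in\mathcal S\}$), the optimal value of Problem (P) coincides with the optimal value of Problem (D), i.e. $$\sup_{\Phi\in\mathsf P}P(\Phi)=\inf_{(\chi,q)\in\mathsf D}D_{\mathcal S}(\chi,q).$$
   Context: Standing setup. All Hilbert spaces are finite-dimensional complex. Fix an integer $T\ge1$ and systems $\mathcal V_1,\dots,\mathcal V_T,\mathcal W_1,\dots,\mathcal W_T$; set $\mathcal W_0:=\mathbb C$ and $\tilde{\mathcal V}:=\mathcal W_T\otimes\mathcal V_T\otimes\cdots\otimes\mathcal W_1\otimes\mathcal V_1$. For a system $\mathcal X$, $N_{\mathcal X}$ is its dimension, $I_{\mathcal X}$ its identity, $\mathrm{Her}_{\mathcal X}$ the real Hilbert space of Hermitian operators on $\mathcal X$ with inner product $\langle X,Y\rangle=\mathrm{Tr}(XY)$, and $\mathrm{Pos}_{\mathcal X}$ the set of positive semidefinite operators; $X\ge Y$ means $X-Y$ is positive semidefinite; $\mathrm{Tr}_{\mathcal X}$ is the partial trace over $\mathcal X$. For a subset $A$ of a real vector space, $\mathrm{Lin}(A)$ is its real linear span and $\overline A$ its closure. $\mathcal I_n:=\{0,\dots,n-1\}$. Combs: $\mathrm{Chn}_{\tilde{\mathcal V}}$ is the set of $c\in\mathrm{Pos}_{\tilde{\mathcal V}}$ for which there exist $c_t\in\mathrm{Pos}_{\mathcal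 W_t\otimes\mathcal V_t\otimes\cdots\otimes\mathcal W_1\otimes\mathcal V_1}$ ($t=1,\dots,T$) with $c_T=c$, $\mathrm{Tr}_{\mathcal W_t}c_t=I_{\mathcal V_t}\otimes c_{t-1}$ for $2\le t\le T$, and $\mathrm{Tr}_{\mathcal W_1}c_1=I_{\mathcal V_1}$. $\mathcal S_G$ is the set of operators $I_{\mathcal W_T}\otimes\tau_T$ where $\tau_t\in\mathrm{Pos}_{\mathcal V_t\otimes\mathcal W_{t-1}\otimes\mathcal V_{t-1}\otimes\cdots\otimes\mathcal W_1\otimes\mathcal V_1}$ ($t=1,\dots,T$) satisfy $\mathrm{Tr}\,\tau_1=1$ and $\mathrm{Tr}_{\mathcal V_t}\tau_t=I_{\mathcal W_{t-1}}\otimes\tau_{t-1}$ for $2\le t\le T$. Fix an integer $M\ge2$; $\mathcal C_G:=\mathrm{Pos}_{\tilde{\mathcal V}}^M$ and the set of (all) testers is $\mathcal T_G:=\{\Phi=\{\Phi_m\}_{m=0}^{M-1}\in\mathcal C_G:\sum_m\Phi_m\in\mathcal S_G\}$. Problem data: an integer $J\ge0$, $c_m,a_{j,m}\in\mathrm{Her}_{\tilde{\mathcal V}}$ and $b_j\in\mathbb R$ ($m\in\mathcal I_M$, $j\in\mathcal I_J$); $\eta_j(\Phi):=\sum_m\langle\Phi_m,a_{j,m}\rangle-b_j$ and $P(\Phi):=\sum_m\langle\Phi_m,c_m\rangle$. $\mathcal T$ is a nonempty convex subset of $\mathcal T_G$, $\mathsf P:=\{\Phi\in\mathcal T:\eta_j(\Phi)\le0\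 \forall j\in\mathcal I_J\}$, and it is assumed that $\overline{\mathsf P}=\{\Phi\in\overline{\mathcal T}:\eta_j(\Phi)\le0\ \forall j\}$. $\mathcal C\subseteq\mathcal C_G$ is a closed convex cone and $\mathcal S\subseteq\mathcal S_G$ a closed convex set with $\overline{\mathcal T}=\{\Phi\in\mathcal C:\sum_m\Phi_m\in\mathcal S\}$. Problem (P): maximize $P(\Phi)$ subject to $\Phi\in\mathsf P$; its optimal value is $\sup_{\Phi\in\mathsf P}P(\Phi)$ ($-\infty$ if $\mathsf P=\emptyset$); an optimal solution is a $\Phi\in\mathsf P$ attaining it. Dual: $\mathcal C^*:=\{\{y_m\}_{m}\in\mathrm{Her}_{\tilde{\mathcal V}}^M:\sum_m\langle\Phi_m,y_m\rangle\ge0\ \forall\Phi\in\mathcal C\}$; $\lambda_{\mathcal S}(\chi):=\sup_{\varphi\in\mathcal S}\langle\varphi,\chi\rangle$; $z_m(q):=c_m-\sum_jq_ja_{j,m}$ for $q=\{q_j\}\in\mathbb R_+^J$; $\mathsf D:=\{(\chi,q)\in\mathrm{Her}_{\tilde{\mathcal V}}\times\mathbb R_+^J:\{\chi-z_m(q)\}_{m}\in\mathcal C^*\}$; $D_{\mathcal S}(\chi,q):=\lambda_{\mathcal S}(\chi)+\sum_jq_jb_j$. Problem (D): minimize $D_{\mathcal S}(\chi,q)$ over $(\chi,q)\in\mathsf D$; its optimal value is the infimum ($+\infty$ if $\mathsf D=\emptyset$); an optimal solution attains it. *)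

theory Defs
  imports "HOL-Analysis.Analysis"
begin

text \<open>Operators on an N-dimensional system are represented as matrices
  nat \<Rightarrow> nat \<Rightarrow> complex, required to vanish outside {..<N} x {..<N}.
  A tensor product X \<otimes> Y (dims d, n) uses the index i*n + j.
  Families {Phi_m}_{m<M} are functions nat \<Rightarrow> op vanishing for m \<ge> M.
  Topology: product topology on functions (which on these finite-support
  subspaces is the Euclidean one).\<close>

type_synonym op = "nat \<Rightarrow> nat \<Rightarrow> complex"

definition supported :: "nat \<Rightarrow> op \<Rightarrow> bool" where
  "supported N A \<longleftrightarrow> (\<forall>i j. (N \<le> i \<or> N \<le> j) \<longrightarrow> A i j = 0)"

definition herm :: "nat \<Rightarrow> op \<Rightarrow> bool" where
  "herm N A \<longleftrightarrow> supported N A \<and> (\<forall>i j. A j i = cnj (A i j))"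

definition psd :: "nat \<Rightarrow> op \<Rightarrow> bool" where
  "psd N A \<longleftrightarrow> herm N A \<and>
     (\<forall>x :: nat \<Rightarrow> complex. 0 \<le> Re (\<Sum>i<N. \<Sum>j<N. cnj (x i) * A i j * x j))"

definition ident :: "nat \<Rightarrow> op" where
  "ident N = (\<lambda>i j. if i < N \<and> i = j then 1 else 0)"

definition trace :: "nat \<Rightarrow> op \<Rightarrow> complex" where
  "trace N A = (\<Sum>i<N. A i i)"

text \<open>Hilbert-Schmidt inner product Tr(XY) (real for Hermitian X, Y).\<close>
definition hs_inner :: "nat \<Rightarrow> op \<Rightarrow> op \<Rightarrow> real" where
  "hs_inner N X Y = Re (\<Sum>i<N. \<Sum>j<N. X i j * Y j i)"

text \<open>Partial trace over the leftmost factor X (dim d) of X \<otimes> Y (dim n).\<close>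
definition ptrace_left :: "nat \<Rightarrow> nat \<Rightarrow> op \<Rightarrow> op" where
  "ptrace_left d n A = (\<lambda>j j'. if j < n \<and> j' < n then (\<Sum>i<d. A (i*n + j) (i*n + j')) else 0)"

text \<open>I_X \<otimes> B, for X of dim d and B on a system of dim n.\<close>
definition kron_id_left :: "nat \<Rightarrow> nat \<Rightarrow> op \<Rightarrow> op" where
  "kron_id_left d n B = (\<lambda>k k'. if k < d*n \<and> k' < d*n \<and> k div n = k' div n
       then B (k mod n) (k' mod n) else 0)"

text \<open>Dimensions: v t = N_{V_t}, w t = N_{W_t} (t = 1..T).
  dimH t = dim (W_t \<otimes> V_t \<otimes> ... \<otimes> W_1 \<otimes> V_1), dimH 0 = 1 (W_0 = C);
  dimK t = dim (V_t \<otimes> W_{t-1} \<otimes> ... \<otimes> V_1) = v t * dimH (t-1).\<close>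
fun dimH :: "(nat \<Rightarrow> nat) \<Rightarrow> (nat \<Rightarrow> nat) \<Rightarrow> nat \<Rightarrow> nat" where
  "dimH v w 0 = 1"
| "dimH v w (Suc t) = w (Suc t) * (v (Suc t) * dimH v w t)"

definition dimK :: "(nat \<Rightarrow> nat) \<Rightarrow> (nat \<Rightarrow> nat) \<Rightarrow> nat \<Rightarrow> nat" where
  "dimK v w t = v t * dimH v w (t - 1)"

definition S_G :: "nat \<Rightarrow> (nat \<Rightarrow> nat) \<Rightarrow> (nat \<Rightarrow> nat) \<Rightarrow> op set" where
  "S_G T v w = {kron_id_left (w T) (dimK v w T) (\<tau> T) | \<tau>.
      (\<forall>t\<in>{1..T}. psd (dimK v w t) (\<tau> t)) \<and>
      trace (dimK v w 1) (\<tau> 1) = 1 \<and>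
      (\<forall>t\<in>{2..T}. ptrace_left (v t) (dimH v w (t - 1)) (\<tau> t)
                    = kron_id_left (w (t - 1)) (dimK v w (t - 1)) (\<tau> (t - 1)))}"

definition famsupp :: "nat \<Rightarrow> (nat \<Rightarrow> op) \<Rightarrow> bool" where
  "famsupp M \<Phi> \<longleftrightarrow> (\<forall>m\<ge>M. \<Phi> m = (\<lambda>i j. 0))"

definition Her_fam :: "nat \<Rightarrow> nat \<Rightarrow> (nat \<Rightarrow> op) set" where
  "Her_fam N M = {\<Phi>. famsupp M \<Phi> \<and> (\<forall>m<M. herm N (\<Phi> m))}"

definition C_G :: "nat \<Rightarrow> nat \<Rightarrow> (nat \<Rightarrow> op) set" where
  "C_G N M = {\<Phi>. famsupp M \<Phi> \<and> (\<forall>m<M. psd N (\<Phi> m))}"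

definition fam_sum :: "nat \<Rightarrow> (nat \<Rightarrow> op) \<Rightarrow> op" where
  "fam_sum M \<Phi> = (\<lambda>i j. \<Sum>m<M. \<Phi> m i j)"

definition T_G :: "nat \<Rightarrow> (nat \<Rightarrow> nat) \<Rightarrow> (nat \<Rightarrow> nat) \<Rightarrow> nat \<Rightarrow> (nat \<Rightarrow> op) set" where
  "T_G T v w M = {\<Phi> \<in> C_G (dimH v w T) M. fam_sum M \<Phi> \<in> S_G T v w}"

definition fam_inner :: "nat \<Rightarrow> nat \<Rightarrow> (nat \<Rightarrow> op) \<Rightarrow> (nat \<Rightarrow> op) \<Rightarrow> real" where
  "fam_inner N M \<Phi> Y = (\<Sum>m<M. hs_inner N (\<Phi> m) (Y m))"

definition convex_ops :: "op set \<Rightarrow> bool" where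
  "convex_ops A \<longleftrightarrow> (\<forall>x\<in>A. \<forall>y\<in>A. \<forall>u::real. 0 \<le> u \<and> u \<le> 1 \<longrightarrow>
      (\<lambda>i j. of_real u * x i j + of_real (1 - u) * y i j) \<in> A)"

definition convex_fams :: "(nat \<Rightarrow> op) set \<Rightarrow> bool" where
  "convex_fams A \<longleftrightarrow> (\<forall>x\<in>A. \<forall>y\<in>A. \<forall>u::real. 0 \<le> u \<and> u \<le> 1 \<longrightarrow>
      (\<lambda>m i j. of_real u * x m i j + of_real (1 - u) * y m i j) \<in> A)"

definition convex_cone_fams :: "(nat \<Rightarrow> op) set \<Rightarrow> bool" where
  "convex_cone_fams A \<longleftrightarrow> convex_fams A \<and>
     (\<forall>x\<in>A. \<forall>r::real. 0 \<le> r \<longrightarrow> (\<lambda>m i j. of_real r * x m i j) \<in> A)"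

definition dual_cone :: "nat \<Rightarrow> nat \<Rightarrow> (nat \<Rightarrow> op) set \<Rightarrow> (nat \<Rightarrow> op) set" where
  "dual_cone N M C = {y \<in> Her_fam N M. \<forall>\<Phi>\<in>C. 0 \<le> fam_inner N M \<Phi> y}"

end

theory Submission
  imports Defs
begin

lemma qf_two:
  fixes x :: "nat \<Rightarrow> complex"
  assumes "i < N" "j < N" "i \<noteq> j" "\<And>k. k \<noteq> i \<Longrightarrow> k \<noteq> j \<Longrightarrow> x k = 0"
  shows "(\<Sum>k<N. \<Sum>l<N. cnj (x k) * A k l * x l) =
     cnj (x i) * A i i * x i + cnj (x i) * A i j * x j + cnj (x j) * A j i * x i + cnj (x j) * A j j * x j"
proof -
  have in_sum: "(\<Sum>l<N. g l * x l) = g i * x i + g j * x j" for g :: "nat \<Rightarrow> complex"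
  proof -
    have "(\<Sum>l<N. g l * x l) = (\<Sum>l\<in>{i,j}. g l * x l)"
      by (rule sum.mono_neutral_right) (use assms in auto)
    then show ?thesis using assms(3) by simp
  qed
  have "(\<Sum>k<N. \<Sum>l<N. cnj (x k) * A k l * x l) = (\<Sum>k\<in>{i,j}. \<Sum>l<N. cnj (x k) * A k l * x l)"
    by (rule sum.mono_neutral_right) (use assms in auto)
  also have "\<dots> = (\<Sum>l<N. cnj (x i) * A i l * x l) + (\<Sum>l<N. cnj (x j) * A j l * x l)"
    using assms(3) by simp
  also have "\<dots> = cnj (x i) * A i i * x i + cnj (x i) * A i j * x j + (cnj (x j) * A j i * x i + cnj (x j) * A j j * x j)"
    using in_sum[of "\<lambda>l. cnj (x i) * A i l"] in_sum[of "\<lambda>l. cnj (x j) * A j l"] by simp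
  finally show ?thesis by simp
qed

lemma qf_one:
  fixes x :: "nat \<Rightarrow> complex"
  assumes "i < N" "\<And>k. k \<noteq> i \<Longrightarrow> x k = 0"
  shows "(\<Sum>k<N. \<Sum>l<N. cnj (x k) * A k l * x l) = cnj (x i) * A i i * x i"
proof -
  have in_sum: "(\<Sum>l<N. g l * x l) = g i * x i" for g :: "nat \<Rightarrow> complex"
  proof -
    have "(\<Sum>l<N. g l * x l) = (\<Sum>l\<in>{i}. g l * x l)"
      by (rule sum.mono_neutral_right) (use assms in auto)
    then show ?thesis by simp
  qed
  have "(\<Sum>k<N. \<Sum>l<N. cnj (x k) * A k l * x l) = (\<Sum>k\<in>{i}. \<Sum>l<N. cnj (x k) * A k l * x l)"
    by (rule sum.mono_neutral_right) (use assms in auto)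
  also have "\<dots> = cnj (x i) * A i i * x i"
    using in_sum[of "\<lambda>l. cnj (x i) * A i l"] by simp
  finally show ?thesis .
qed

lemma herm_diag_real: "herm N A \<Longrightarrow> Im (A i i) = 0"
proof -
  assume "herm N A"
  then have "A i i = cnj (A i i)" unfolding herm_def by blast
  then show ?thesis by (simp add: complex_eq_iff)
qed

lemma psd_diag_nonneg:
  assumes "psd N A" "i < N" shows "0 \<le> Re (A i i)"
proof -
  define x :: "nat \<Rightarrow> complex" where "x = (\<lambda>k. if k = i then 1 else 0)"
  have "(\<Sum>k<N. \<Sum>l<N. cnj (x k) * A k l * x l) = A i i"
    using qf_one[of i N x A] assms(2) by (simp add: x_def)
  moreover have "0 \<le> Re (\<Sum>k<N. \<Sum>l<N. cnj (x k) * A k l * x l)"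
    using assms(1) unfolding psd_def by blast
  ultimately show ?thesis by simp
qed

lemma cnj_sgn_mult: "cnj (sgn b) * b = complex_of_real (cmod b)"
proof (cases "b = 0")
  case False
  have "cnj (sgn b) * b = cnj b * b / complex_of_real (cmod b)"
    by (simp add: sgn_div_norm divide_inverse scaleR_conv_of_real)
  also have "cnj b * b = complex_of_real ((cmod b)^2)" using complex_norm_square[of b] by (simp add: mult.commute)
  finally show ?thesis using False by (simp add: power2_eq_square)
qed simp

lemma psd_offdiag:
  assumes "psd N A" "i < N" "j < N" "i \<noteq> j"
  shows "2 * cmod (A i j) \<le> Re (A i i) + Re (A j j)"
proof -
  define b where "b = A i j"
  have hji: "A j i = cnj b" using assms(1) unfolding psd_def herm_def b_def by blast
  define x :: "nat \<Rightarrow> complex" where "x = (\<lambda>k. if k = i then - sgn b else if k = j then 1 else 0)"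
  have Q: "(\<Sum>k<N. \<Sum>l<N. cnj (x k) * A k l * x l) =
     cnj (x i) * A i i * x i + cnj (x i) * A i j * x j + cnj (x j) * A j i * x i + cnj (x j) * A j j * x j"
    by (rule qf_two) (use assms in \<open>auto simp: x_def\<close>)
  have xi: "x i = - sgn b" and xj: "x j = 1" using assms(4) by (auto simp: x_def)
  have t2: "cnj (x i) * A i j * x j = - complex_of_real (cmod b)"
    using cnj_sgn_mult[of b] by (simp add: xi xj b_def)
  have t3: "cnj (x j) * A j i * x i = - complex_of_real (cmod b)"
  proof -
    have "cnj b * sgn b = cnj (cnj (sgn b) * b)" by simp
    also have "\<dots> = complex_of_real (cmod b)" using cnj_sgn_mult[of b] by simp
    finally show ?thesis by (simp add: xi xj hji)
  qed
  have t1: "Re (cnj (x i) * A i i * x i) \<le> Re (A i i)"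
  proof -
    have "cnj (x i) * A i i * x i = A i i * (cnj (sgn b) * sgn b)" by (simp add: xi)
    also have "cnj (sgn b) * sgn b = complex_of_real ((cmod (sgn b))^2)"
      using complex_norm_square[of "sgn b"] by (simp add: mult.commute)
    finally have e: "cnj (x i) * A i i * x i = A i i * complex_of_real ((cmod (sgn b))^2)" .
    have "(cmod (sgn b))^2 \<le> 1" by (cases "b = 0") (simp_all add: norm_sgn)
    moreover have "0 \<le> Re (A i i)" using psd_diag_nonneg assms by blast
    ultimately have "Re (A i i) * (cmod (sgn b))^2 \<le> Re (A i i)"
      by (simp add: mult_left_le)
    then show ?thesis by (subst e) simp
  qed
  have t4: "cnj (x j) * A j j * x j = A j j" by (simp add: xj)
  have "0 \<le> Re (\<Sum>k<N. \<Sum>l<N. cnj (x k) * A k l * x l)"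
    using assms(1) unfolding psd_def by blast
  then show ?thesis using Q t1 t2 t3 t4 by (simp add: b_def)
qed

lemma psd_herm: "psd N A \<Longrightarrow> herm N A" by (simp add: psd_def)
lemma psd_supp: "psd N A \<Longrightarrow> supported N A" by (simp add: psd_def herm_def)

lemma Re_trace: "Re (trace N A) = (\<Sum>k<N. Re (A k k))"
  by (simp add: trace_def)

lemma psd_trace_nonneg: "psd N A \<Longrightarrow> 0 \<le> Re (trace N A)"
  unfolding Re_trace by (rule sum_nonneg) (use psd_diag_nonneg in auto)

lemma psd_diag_le_trace: assumes "psd N A" "i < N" shows "Re (A i i) \<le> Re (trace N A)"
proof -
  have "(\<Sum>k\<in>{i}. Re (A k k)) \<le> (\<Sum>k<N. Re (A k k))"
    by (rule sum_mono2) (use assms psd_diag_nonneg in auto)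
  then show ?thesis by (simp add: Re_trace)
qed

lemma psd_entry_bound:
  assumes "psd N A" shows "cmod (A i j) \<le> Re (trace N A)"
proof (cases "i < N \<and> j < N")
  case False
  then have "A i j = 0" using psd_supp[OF assms] unfolding supported_def by auto
  then show ?thesis using psd_trace_nonneg[OF assms] by simp
next
  case True
  show ?thesis
  proof (cases "i = j")
    case True': True
    have "A i i = complex_of_real (Re (A i i))"
      using herm_diag_real[OF psd_herm[OF assms], of i] by (simp add: complex_eq_iff)
    then have "cmod (A i i) = Re (A i i)" using psd_diag_nonneg[OF assms, of i] True
      by (metis norm_of_real abs_of_nonneg)
    then show ?thesis using psd_diag_le_trace[OF assms, of i] True True' by simp
  next
    case False
    have "(\<Sum>k\<in>{i,j}. Re (A k k)) \<le> (\<Sum>k<N. Re (A k k))"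
      by (rule sum_mono2) (use assms psd_diag_nonneg True in auto)
    then have "Re (A i i) + Re (A j j) \<le> Re (trace N A)" using False by (simp add: Re_trace)
    moreover have "0 \<le> cmod (A i j)" by simp
    ultimately show ?thesis using psd_offdiag[OF assms, of i j] True False by linarith
  qed
qed

lemma sum_lessThan_add: "(\<Sum>k<m+(n::nat). f k) = (\<Sum>k<m. f k) + (\<Sum>k<n. f (m + k))"
  by (induction n) (simp_all add: add.assoc)

lemma sum_split_mult: "(\<Sum>k<d*(n::nat). g k) = (\<Sum>i<d. \<Sum>j<n. g (i*n+j))"
proof (induction d)
  case (Suc d)
  have "(\<Sum>k<Suc d * n. g k) = (\<Sum>k<d*n + n. g k)" by (simp add: add.commute)
  also have "\<dots> = (\<Sum>k<d*n. g k) + (\<Sum>j<n. g (d*n + j))" by (rule sum_lessThan_add)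
  finally show ?case using Suc by simp
qed simp

lemma trace_kron: "trace (d*n) (kron_id_left d n B) = of_nat d * trace n B"
proof -
  have "trace (d*n) (kron_id_left d n B) = (\<Sum>i<d. \<Sum>j<n. kron_id_left d n B (i*n+j) (i*n+j))"
    unfolding trace_def by (rule sum_split_mult)
  also have "\<dots> = (\<Sum>i<d. \<Sum>j<n. B j j)"
  proof (rule sum.cong[OF refl], rule sum.cong[OF refl])
    fix i j assume "i \<in> {..<d}" "j \<in> {..<n}"
    then have "i*n+j < Suc i * n" by simp
    also have "Suc i * n \<le> d * n" using \<open>i \<in> {..<d}\<close> by (intro mult_le_mono1) simp
    finally have "i*n+j < d*n" .
    moreover have "(i*n+j) mod n = j" using \<open>j \<in> {..<n}\<close> by simp
    ultimately show "kron_id_left d n B (i*n+j) (i*n+j) = B j j"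
      unfolding kron_id_left_def by simp
  qed
  finally show ?thesis by (simp add: trace_def)
qed

lemma trace_ptrace: "trace n (ptrace_left d n A) = trace (d*n) A"
proof -
  have "trace n (ptrace_left d n A) = (\<Sum>j<n. \<Sum>i<d. A (i*n+j) (i*n+j))"
    unfolding trace_def ptrace_left_def by simp
  also have "\<dots> = (\<Sum>i<d. \<Sum>j<n. A (i*n+j) (i*n+j))" by (rule sum.swap)
  also have "\<dots> = trace (d*n) A" unfolding trace_def by (rule sum_split_mult[symmetric])
  finally show ?thesis .
qed

lemma kron_herm: assumes "herm n B" shows "herm (d*n) (kron_id_left d n B)"
  unfolding herm_def
proof (intro conjI allI)
  show "supported (d*n) (kron_id_left d n B)"
    unfolding supported_def kron_id_left_def by simp
  fix i j
  have h: "B (j mod n) (i mod n) = cnj (B (i mod n) (j mod n))" using assms unfolding herm_def by blast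
  show "kron_id_left d n B j i = cnj (kron_id_left d n B i j)"
  proof (cases "i < d*n \<and> j < d*n \<and> i div n = j div n")
    case True
    then show ?thesis unfolding kron_id_left_def using h by simp
  next
    case False
    then have "\<not> (j < d*n \<and> i < d*n \<and> j div n = i div n)" by auto
    then show ?thesis unfolding kron_id_left_def using False by (simp only: if_False) simp
  qed
qed

lemma kron_entry: "kron_id_left d n B i j = 0 \<or> kron_id_left d n B i j = B (i mod n) (j mod n)"
  unfolding kron_id_left_def by (cases "i < d*n \<and> j < d*n \<and> i div n = j div n") (simp only: if_True, simp, simp only: if_False, simp)

lemma dimH_Suc_dimK: "dimH v w (Suc s) = w (Suc s) * dimK v w (Suc s)"
  by (simp add: dimK_def)

lemma S_G_props:
  assumes phi: "\<phi> \<in> S_G T v w" and T1: "1 \<le> T" and dims: "\<forall>t\<in>{1..T}. 0 < v t \<and> 0 < w t"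
  shows "trace (dimH v w T) \<phi> = of_nat (\<Prod>t\<in>{1..T}. w t)"
    and "herm (dimH v w T) \<phi>"
    and "\<forall>i j. cmod (\<phi> i j) \<le> real (\<Prod>t\<in>{1..T}. w t)"
proof -
  obtain \<tau> where phidef: "\<phi> = kron_id_left (w T) (dimK v w T) (\<tau> T)"
    and psdt: "\<forall>t\<in>{1..T}. psd (dimK v w t) (\<tau> t)"
    and tr1: "trace (dimK v w 1) (\<tau> 1) = 1"
    and chain: "\<forall>t\<in>{2..T}. ptrace_left (v t) (dimH v w (t - 1)) (\<tau> t)
                    = kron_id_left (w (t - 1)) (dimK v w (t - 1)) (\<tau> (t - 1))"
    using phi unfolding S_G_def by blast
  have trt: "trace (dimK v w t) (\<tau> t) = of_nat (\<Prod>s\<in>{1..<t}. w s)" if "1 \<le> t" "t \<le> T" for t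
    using that
  proof (induction t)
    case 0 then show ?case by simp
  next
    case (Suc s)
    show ?case
    proof (cases "s = 0")
      case True then show ?thesis using tr1 by simp
    next
      case False
      then obtain s' where s': "s = Suc s'" by (cases s) auto
      have IH: "trace (dimK v w s) (\<tau> s) = of_nat (\<Prod>s\<in>{1..<s}. w s)"
        using Suc False by simp
      have ch: "ptrace_left (v (Suc s)) (dimH v w s) (\<tau> (Suc s)) = kron_id_left (w s) (dimK v w s) (\<tau> s)"
      proof -
        have "Suc s \<in> {2..T}" using Suc.prems False by auto
        then show ?thesis using chain by (metis diff_Suc_1)
      qed
      have "trace (dimK v w (Suc s)) (\<tau> (Suc s)) = trace (dimH v w s) (ptrace_left (v (Suc s)) (dimH v w s) (\<tau> (Suc s)))"
        by (simp add: trace_ptrace dimK_def)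
      also have "\<dots> = trace (dimH v w s) (kron_id_left (w s) (dimK v w s) (\<tau> s))"
        using ch by simp
      also have "dimH v w s = w s * dimK v w s" using s' dimH_Suc_dimK by simp
      also have "trace (w s * dimK v w s) (kron_id_left (w s) (dimK v w s) (\<tau> s)) = of_nat (w s) * of_nat (\<Prod>s\<in>{1..<s}. w s)" by (simp add: trace_kron IH)
      also have "\<dots> = of_nat (\<Prod>s\<in>{1..<Suc s}. w s)"
        using False by (simp add: prod.atLeastLessThan_Suc mult.commute)
      finally show ?thesis .
    qed
  qed
  obtain T' where T': "T = Suc T'" using T1 by (cases T) auto
  have NT: "dimH v w T = w T * dimK v w T" using T' dimH_Suc_dimK by simp
  have "trace (dimH v w T) \<phi> = of_nat (w T) * of_nat (\<Prod>s\<in>{1..<T}. w s)"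
    using NT phidef trace_kron trt[of T] T1 by simp
  also have "\<dots> = of_nat (\<Prod>t\<in>{1..T}. w t)"
    using T' by (simp add: prod.atLeastLessThan_Suc atLeastLessThanSuc_atLeastAtMost[symmetric] mult.commute)
  finally show "trace (dimH v w T) \<phi> = of_nat (\<Prod>t\<in>{1..T}. w t)" .
  have psdT: "psd (dimK v w T) (\<tau> T)" using psdt T1 by auto
  show "herm (dimH v w T) \<phi>" using NT phidef kron_herm psd_herm[OF psdT] by simp
  show "\<forall>i j. cmod (\<phi> i j) \<le> real (\<Prod>t\<in>{1..T}. w t)"
  proof (intro allI)
    fix i j
    have "cmod (\<phi> i j) \<le> Re (trace (dimK v w T) (\<tau> T))"
      using kron_entry[of "w T" "dimK v w T" "\<tau> T" i j] psd_entry_bound[OF psdT] psd_trace_nonneg[OF psdT]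
        phidef by auto
    also have "\<dots> = real (\<Prod>s\<in>{1..<T}. w s)" using trt[of T] T1 by (simp del: of_nat_prod)
    also have "\<dots> \<le> real (\<Prod>t\<in>{1..T}. w t)"
    proof -
      have "0 < w T" using dims T1 by auto
      then have "(\<Prod>s\<in>{1..<T}. w s) \<le> (\<Prod>s\<in>{1..<T}. w s) * w T" by simp
      also have "\<dots> = (\<Prod>t\<in>{1..T}. w t)"
        using T' by (simp add: prod.atLeastLessThan_Suc atLeastLessThanSuc_atLeastAtMost[symmetric])
      finally show ?thesis by linarith
    qed
    finally show "cmod (\<phi> i j) \<le> real (\<Prod>t\<in>{1..T}. w t)" .
  qed
qed

lemma hs_diff_left: "hs_inner N (\<lambda>i k. X i k - Y i k) Z = hs_inner N X Z - hs_inner N Y Z"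
  unfolding hs_inner_def by (simp add: algebra_simps sum_subtractf)

lemma hs_diff_right: "hs_inner N Z (\<lambda>i k. X i k - Y i k) = hs_inner N Z X - hs_inner N Z Y"
  unfolding hs_inner_def by (simp add: algebra_simps sum_subtractf)

lemma hs_scale_right: "hs_inner N X (\<lambda>i k. of_real t * Z i k) = t * hs_inner N X Z"
proof -
  have "(\<Sum>i<N. \<Sum>j<N. X i j * (of_real t * Z j i)) = of_real t * (\<Sum>i<N. \<Sum>j<N. X i j * Z j i)"
    by (simp add: sum_distrib_left algebra_simps)
  then show ?thesis unfolding hs_inner_def by simp
qed

lemma hs_scale_left: "hs_inner N (\<lambda>i k. of_real t * Z i k) X = t * hs_inner N Z X"
proof -
  have "(\<Sum>i<N. \<Sum>j<N. (of_real t * Z i j) * X j i) = of_real t * (\<Sum>i<N. \<Sum>j<N. Z i j * X j i)"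
    by (simp add: sum_distrib_left algebra_simps)
  then show ?thesis unfolding hs_inner_def by simp
qed

lemma hs_comb_left: "hs_inner N (\<lambda>i k. A i k + of_real s * (B i k - A i k)) Y
     = hs_inner N A Y + s * (hs_inner N B Y - hs_inner N A Y)"
proof -
  have "(\<Sum>i<N. \<Sum>j<N. (A i j + of_real s * (B i j - A i j)) * Y j i)
     = (\<Sum>i<N. \<Sum>j<N. A i j * Y j i) + of_real s * ((\<Sum>i<N. \<Sum>j<N. B i j * Y j i) - (\<Sum>i<N. \<Sum>j<N. A i j * Y j i))"
    by (simp add: sum_distrib_left algebra_simps sum.distrib sum_subtractf)
  then show ?thesis unfolding hs_inner_def by simp
qed

lemma hs_fam_sum: "hs_inner N (fam_sum M \<Phi>) Z = (\<Sum>m<M. hs_inner N (\<Phi> m) Z)"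
proof -
  have "(\<Sum>i<N. \<Sum>j<N. (\<Sum>m<M. \<Phi> m i j) * Z j i) = (\<Sum>m<M. \<Sum>i<N. \<Sum>j<N. \<Phi> m i j * Z j i)"
    by (simp add: sum_distrib_right sum.swap[of _ "{..<M}"])
  then show ?thesis unfolding hs_inner_def fam_sum_def by (simp add: Re_sum)
qed

lemma hs_ident: "hs_inner N Y (ident N) = Re (trace N Y)"
proof -
  have "(\<Sum>i<N. \<Sum>j<N. Y i j * ident N j i) = (\<Sum>i<N. Y i i)"
  proof (rule sum.cong[OF refl])
    fix i assume "i \<in> {..<N}"
    have "(\<Sum>j<N. Y i j * ident N j i) = (\<Sum>j\<in>{i}. Y i j * ident N j i)"
      by (rule sum.mono_neutral_right) (use \<open>i \<in> {..<N}\<close> in \<open>auto simp: ident_def\<close>)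
    then show "(\<Sum>j<N. Y i j * ident N j i) = Y i i" using \<open>i \<in> {..<N}\<close> by (simp add: ident_def)
  qed
  then show ?thesis unfolding hs_inner_def trace_def by simp
qed

lemma hs_herm_expand: assumes "herm N Y"
  shows "hs_inner N X Y = (\<Sum>i<N. \<Sum>k<N. Re (cnj (Y i k) * X i k))"
proof -
  have h: "\<And>i k. Y k i = cnj (Y i k)" using assms unfolding herm_def by blast
  have "(\<Sum>i<N. \<Sum>k<N. X i k * Y k i) = (\<Sum>i<N. \<Sum>k<N. cnj (Y i k) * X i k)"
  proof (rule sum.cong[OF refl], rule sum.cong[OF refl])
    fix i k show "X i k * Y k i = cnj (Y i k) * X i k" using h[of k i] by (simp add: mult.commute)
  qed
  then show ?thesis unfolding hs_inner_def by (simp only: Re_sum)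
qed

lemma hs_self: assumes "herm N Y"
  shows "hs_inner N Y Y = (\<Sum>i<N. \<Sum>k<N. (cmod (Y i k))^2)"
  unfolding hs_herm_expand[OF assms]
  by (simp add: complex_norm_square[symmetric] mult.commute del: of_real_power)

lemma trace_fam_sum: "trace N (fam_sum M \<Phi>) = (\<Sum>m<M. trace N (\<Phi> m))"
  unfolding trace_def fam_sum_def by (rule sum.swap)

lemma fam_inner_comb: "fam_inner N M (\<lambda>m i k. A m i k + of_real s * (B m i k - A m i k)) Y
     = fam_inner N M A Y + s * (fam_inner N M B Y - fam_inner N M A Y)"
  unfolding fam_inner_def using hs_comb_left[of N "A m" s "B m" "Y m" for m]
  by (simp add: sum.distrib sum_subtractf sum_distrib_left[symmetric] right_diff_distrib[symmetric])

lemma fam_inner_scale: "fam_inner N M (\<lambda>m i k. of_real t * \<Phi> m i k) Y = t * fam_inner N M \<Phi> Y"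
  unfolding fam_inner_def using hs_scale_left[of N t "\<Phi> m" "Y m" for m]
  by (simp add: sum_distrib_left)

lemma compact_PiE_UNIV:
  fixes S :: "'a \<Rightarrow> 'b::topological_space set"
  assumes "\<And>i. compact (S i)" shows "compact (PiE UNIV S)"
proof -
  have "compactin (product_topology (\<lambda>i. euclidean) UNIV) (PiE UNIV S)"
    using assms by (simp add: compactin_PiE)
  then show ?thesis by (simp add: euclidean_product_topology)
qed

lemma compact_fam_box: "compact {\<Phi> :: nat \<Rightarrow> nat \<Rightarrow> nat \<Rightarrow> complex. \<forall>m i j. cmod (\<Phi> m i j) \<le> R}"
proof -
  have c1: "compact (PiE UNIV (\<lambda>j::nat. cball (0::complex) R))" by (rule compact_PiE_UNIV) simp
  have c2: "compact (PiE UNIV (\<lambda>i::nat. PiE UNIV (\<lambda>j::nat. cball (0::complex) R)))"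
    by (rule compact_PiE_UNIV) (rule c1)
  have c3: "compact (PiE UNIV (\<lambda>m::nat. PiE UNIV (\<lambda>i::nat. PiE UNIV (\<lambda>j::nat. cball (0::complex) R))))"
    by (rule compact_PiE_UNIV) (rule c2)
  have "PiE UNIV (\<lambda>m::nat. PiE UNIV (\<lambda>i::nat. PiE UNIV (\<lambda>j::nat. cball (0::complex) R)))
      = {\<Phi> :: nat \<Rightarrow> nat \<Rightarrow> nat \<Rightarrow> complex. \<forall>m i j. cmod (\<Phi> m i j) \<le> R}"
    by (auto simp: PiE_UNIV_domain Pi_iff)
  then show ?thesis using c3 by simp
qed

lemma compact_op_box: "compact {\<phi> :: nat \<Rightarrow> nat \<Rightarrow> complex. \<forall>i j. cmod (\<phi> i j) \<le> R}"
proof -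
  have c1: "compact (PiE UNIV (\<lambda>j::nat. cball (0::complex) R))" by (rule compact_PiE_UNIV) simp
  have c2: "compact (PiE UNIV (\<lambda>i::nat. PiE UNIV (\<lambda>j::nat. cball (0::complex) R)))"
    by (rule compact_PiE_UNIV) (rule c1)
  have "PiE UNIV (\<lambda>i::nat. PiE UNIV (\<lambda>j::nat. cball (0::complex) R))
      = {\<phi> :: nat \<Rightarrow> nat \<Rightarrow> complex. \<forall>i j. cmod (\<phi> i j) \<le> R}"
    by (auto simp: PiE_UNIV_domain Pi_iff)
  then show ?thesis using c2 by simp
qed

lemma compact_bounded_closed:
  assumes "compact B" "closed A" "A \<subseteq> B" shows "compact A"
proof -
  have "compact (B \<inter> A)" using assms by (intro compact_Int_closed)
  moreover have "B \<inter> A = A" using assms by auto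
  ultimately show ?thesis by simp
qed

lemma cont_app2: "continuous_on S f \<Longrightarrow> continuous_on S (\<lambda>x. f x i j)"
  by (rule continuous_on_product_then_coordinatewise, rule continuous_on_product_then_coordinatewise)

lemma cont_app3: "continuous_on S f \<Longrightarrow> continuous_on S (\<lambda>x. f x m i j)"
  by (rule continuous_on_product_then_coordinatewise, rule continuous_on_product_then_coordinatewise,
      rule continuous_on_product_then_coordinatewise)

lemma cont_fam_inner: assumes "continuous_on S f" shows "continuous_on S (\<lambda>x. fam_inner N M (f x) Y)"
proof -
  have h: "\<And>m i j. continuous_on S (\<lambda>x. f x m i j)" using cont_app3[OF assms] .
  show ?thesis unfolding fam_inner_def hs_inner_def
    by (intro continuous_on_sum continuous_on_Re continuous_on_mult_right h)
qed

lemma cont_hs_inner: assumes "continuous_on S f" shows "continuous_on S (\<lambda>x. hs_inner N (f x) Y)"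
proof -
  have h: "\<And>i j. continuous_on S (\<lambda>x. f x i j)" using cont_app2[OF assms] .
  show ?thesis unfolding hs_inner_def
    by (intro continuous_on_sum continuous_on_Re continuous_on_mult_right h)
qed

lemma cont_trace_fam_sum: assumes "continuous_on S f" shows "continuous_on S (\<lambda>x. Re (trace N (fam_sum M (f x))))"
proof -
  have h: "\<And>m i j. continuous_on S (\<lambda>x. f x m i j)" using cont_app3[OF assms] .
  show ?thesis unfolding trace_def fam_sum_def
    by (intro continuous_on_sum continuous_on_Re h)
qed

lemma CG_psd: "\<Phi> \<in> C_G N M \<Longrightarrow> m < M \<Longrightarrow> psd N (\<Phi> m)"
  unfolding C_G_def by blast

lemma CG_zero: "\<Phi> \<in> C_G N M \<Longrightarrow> M \<le> m \<Longrightarrow> \<Phi> m i j = 0"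
  unfolding C_G_def famsupp_def by auto

lemma Re_trace_fam_sum: "Re (trace N (fam_sum M \<Phi>)) = (\<Sum>m<M. Re (trace N (\<Phi> m)))"
  by (simp add: trace_fam_sum Re_sum)

lemma CG_trace_nonneg: "\<Phi> \<in> C_G N M \<Longrightarrow> 0 \<le> Re (trace N (fam_sum M \<Phi>))"
  unfolding Re_trace_fam_sum by (rule sum_nonneg) (use CG_psd psd_trace_nonneg in auto)

lemma CG_trace_le: assumes "\<Phi> \<in> C_G N M" "m < M"
  shows "Re (trace N (\<Phi> m)) \<le> Re (trace N (fam_sum M \<Phi>))"
proof -
  have "(\<Sum>k\<in>{m}. Re (trace N (\<Phi> k))) \<le> (\<Sum>k<M. Re (trace N (\<Phi> k)))"
    by (rule sum_mono2) (use assms CG_psd psd_trace_nonneg in auto)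
  then show ?thesis by (simp add: Re_trace_fam_sum)
qed

lemma CG_entry_bound: assumes "\<Phi> \<in> C_G N M"
  shows "cmod (\<Phi> m i j) \<le> Re (trace N (fam_sum M \<Phi>))"
proof (cases "m < M")
  case True
  then show ?thesis using psd_entry_bound[OF CG_psd[OF assms True], of i j] CG_trace_le[OF assms True] by linarith
next
  case False
  then show ?thesis using CG_zero[OF assms] CG_trace_nonneg[OF assms] by simp
qed

lemma herm_diff: assumes "herm N X" "herm N Y" shows "herm N (\<lambda>i k. X i k - Y i k)"
proof -
  have sX: "supported N X" and sY: "supported N Y" and hX: "\<And>i k. X k i = cnj (X i k)" and hY: "\<And>i k. Y k i = cnj (Y i k)"
    using assms unfolding herm_def by blast+
  show ?thesis unfolding herm_def
  proof (intro conjI allI)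
    show "supported N (\<lambda>i k. X i k - Y i k)" using sX sY unfolding supported_def by simp
    fix i k show "X k i - Y k i = cnj (X i k - Y i k)" using hX[of i k] hY[of i k] by simp
  qed
qed

lemma herm_scale: assumes "herm N X" shows "herm N (\<lambda>i k. of_real t * X i k)"
proof -
  have sX: "supported N X" and hX: "\<And>i k. X k i = cnj (X i k)"
    using assms unfolding herm_def by blast+
  show ?thesis unfolding herm_def
  proof (intro conjI allI)
    show "supported N (\<lambda>i k. of_real t * X i k)" using sX unfolding supported_def by simp
    fix i k show "of_real t * X k i = cnj (of_real t * X i k)" using hX[of i k] by simp
  qed
qed

lemma herm_sum: assumes "\<And>j. j \<in> A \<Longrightarrow> herm N (f j)" shows "herm N (\<lambda>i k. \<Sum>j\<in>A. f j i k)"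
proof -
  have sX: "\<And>j. j \<in> A \<Longrightarrow> supported N (f j)" and hX: "\<And>j i k. j \<in> A \<Longrightarrow> f j k i = cnj (f j i k)"
    using assms unfolding herm_def by blast+
  show ?thesis unfolding herm_def
  proof (intro conjI allI)
    show "supported N (\<lambda>i k. \<Sum>j\<in>A. f j i k)" using sX unfolding supported_def by simp
    fix i k show "(\<Sum>j\<in>A. f j k i) = cnj (\<Sum>j\<in>A. f j i k)"
      by (simp add: cnj_sum) (rule sum.cong[OF refl], rule hX)
  qed
qed

lemma herm_ident: "herm N (ident N)"
  unfolding herm_def supported_def ident_def by simp

lemma hs_sum_right: "hs_inner N X (\<lambda>i k. \<Sum>j\<in>A. f j i k) = (\<Sum>j\<in>A. hs_inner N X (f j))"
proof -
  have "(\<Sum>i<N. \<Sum>l<N. X i l * (\<Sum>j\<in>A. f j l i)) = (\<Sum>j\<in>A. \<Sum>i<N. \<Sum>l<N. X i l * f j l i)"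
    by (simp add: sum_distrib_left sum.swap[of _ A])
  then show ?thesis unfolding hs_inner_def by (simp add: Re_sum)
qed

lemma hs_z: "hs_inner N X (\<lambda>i k. C i k - (\<Sum>j<J. of_real (q j) * A j i k))
   = hs_inner N X C - (\<Sum>j<J. q j * hs_inner N X (A j))"
  by (simp add: hs_diff_right hs_sum_right hs_scale_right)

lemma Re_trace_scale: "Re (trace N (fam_sum M (\<lambda>m i k. of_real t * \<Phi> m i k))) = t * Re (trace N (fam_sum M \<Phi>))"
proof -
  have "trace N (fam_sum M (\<lambda>m i k. of_real t * \<Phi> m i k)) = of_real t * trace N (fam_sum M \<Phi>)"
    unfolding trace_def fam_sum_def by (simp add: sum_distrib_left)
  then show ?thesis by simp
qed

lemma fam_inner_zero: assumes "\<And>m i j. m < M \<Longrightarrow> \<Phi> m i j = 0" shows "fam_inner N M \<Phi> Y = 0"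
  unfolding fam_inner_def hs_inner_def using assms by simp

lemma fam_inner_Y:
  "fam_inner N M \<Phi> (\<lambda>m. if m < M then (\<lambda>i k. chi i k - Z m i k) else (\<lambda>i k. 0))
     = hs_inner N (fam_sum M \<Phi>) chi - fam_inner N M \<Phi> Z"
proof -
  have "fam_inner N M \<Phi> (\<lambda>m. if m < M then (\<lambda>i k. chi i k - Z m i k) else (\<lambda>i k. 0))
      = (\<Sum>m<M. hs_inner N (\<Phi> m) chi - hs_inner N (\<Phi> m) (Z m))"
    unfolding fam_inner_def by (rule sum.cong[OF refl]) (simp add: hs_diff_right)
  also have "\<dots> = hs_inner N (fam_sum M \<Phi>) chi - fam_inner N M \<Phi> Z"
    by (simp add: sum_subtractf hs_fam_sum fam_inner_def)
  finally show ?thesis .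
qed

lemma assemble:
  fixes N M J :: nat and c :: "nat \<Rightarrow> op" and a :: "nat \<Rightarrow> nat \<Rightarrow> op" and b :: "nat \<Rightarrow> real"
    and Cset :: "(nat \<Rightarrow> op) set" and Sset :: "op set" and c0 r :: real and chi1 :: op and q :: "nat \<Rightarrow> real"
  assumes c_herm: "\<forall>m<M. herm N (c m)" and a_herm: "\<forall>j<J. \<forall>m<M. herm N (a j m)"
    and C_sub: "Cset \<subseteq> C_G N M" and C_cone: "convex_cone_fams Cset"
    and S_tr: "\<forall>\<phi>\<in>Sset. Re (trace N \<phi>) = c0"
    and c0pos: "0 < c0" and Sne: "Sset \<noteq> {}"
    and K1ne: "\<exists>\<Phi>\<in>Cset. Re (trace N (fam_sum M \<Phi>)) = c0"
    and h1: "herm N chi1" and qpos: "\<forall>j<J. 0 \<le> q j" and qzero: "\<forall>j\<ge>J. q j = 0"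
    and ineq: "\<forall>\<Phi>\<in>Cset. Re (trace N (fam_sum M \<Phi>)) = c0 \<longrightarrow> (\<forall>\<phi>\<in>Sset.
      hs_inner N \<phi> chi1 + (\<Sum>j<J. q j * b j) - r \<le> hs_inner N (fam_sum M \<Phi>) chi1
          - fam_inner N M \<Phi> (\<lambda>m i k. c m i k - (\<Sum>j<J. of_real (q j) * a j m i k)))"
  shows "\<exists>chi. herm N chi \<and>
     (\<lambda>m. if m < M then (\<lambda>i k. chi i k - (c m i k - (\<Sum>j<J. of_real (q j) * a j m i k))) else (\<lambda>i k. 0))
        \<in> dual_cone N M Cset \<and> (\<forall>\<phi>\<in>Sset. hs_inner N \<phi> chi + (\<Sum>j<J. q j * b j) \<le> r)"
proof -
  define Z where "Z = (\<lambda>m i k. c m i k - (\<Sum>j<J. of_real (q j) * a j m i k))"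
  define K1 where "K1 = {\<Phi>\<in>Cset. Re (trace N (fam_sum M \<Phi>)) = c0}"
  define B where "B = (\<lambda>\<Phi>. hs_inner N (fam_sum M \<Phi>) chi1 - fam_inner N M \<Phi> Z)"
  define \<gamma> where "\<gamma> = (\<Sum>j<J. q j * b j) - r"
  obtain \<phi>0 where phi0: "\<phi>0 \<in> Sset" using Sne by blast
  have ineq': "\<And>\<Phi> \<phi>. \<Phi> \<in> K1 \<Longrightarrow> \<phi> \<in> Sset \<Longrightarrow> hs_inner N \<phi> chi1 + \<gamma> \<le> B \<Phi>"
    using ineq unfolding K1_def B_def \<gamma>_def Z_def by (auto simp: algebra_simps)
  have K1ne': "K1 \<noteq> {}" using K1ne unfolding K1_def by blast
  define \<alpha> where "\<alpha> = Inf (B ` K1)"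
  have bdd: "bdd_below (B ` K1)"
    using ineq'[OF _ phi0] by (auto intro!: bdd_belowI)
  have \<alpha>_le: "\<And>\<Phi>. \<Phi> \<in> K1 \<Longrightarrow> \<alpha> \<le> B \<Phi>"
    unfolding \<alpha>_def using bdd by (auto intro: cInf_lower)
  have \<alpha>_ge: "\<And>\<phi>. \<phi> \<in> Sset \<Longrightarrow> hs_inner N \<phi> chi1 + \<gamma> \<le> \<alpha>"
    unfolding \<alpha>_def using K1ne' ineq' by (auto intro!: cInf_greatest)
  define chi where "chi = (\<lambda>i k. chi1 i k - of_real (\<alpha>/c0) * ident N i k)"
  have hchi: "herm N chi" unfolding chi_def by (intro herm_diff h1 herm_scale herm_ident)
  have hs_chi: "hs_inner N X chi = hs_inner N X chi1 - (\<alpha>/c0) * Re (trace N X)" for X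
    unfolding chi_def hs_diff_right hs_scale_right hs_ident by (rule refl)
  have Zherm: "herm N (Z m)" if "m < M" for m
    unfolding Z_def using that c_herm a_herm by (intro herm_diff herm_sum herm_scale) auto
  define Y where "Y = (\<lambda>m. if m < M then (\<lambda>i k. chi i k - Z m i k) else (\<lambda>i k. 0))"
  have FY: "fam_inner N M \<Phi> Y = B \<Phi> - (\<alpha>/c0) * Re (trace N (fam_sum M \<Phi>))" for \<Phi>
    unfolding Y_def fam_inner_Y B_def hs_chi by simp
  have posK1: "0 \<le> fam_inner N M \<Phi> Y" if "\<Phi> \<in> K1" for \<Phi>
    using FY[of \<Phi>] \<alpha>_le[OF that] that c0pos unfolding K1_def by simp
  have posC: "0 \<le> fam_inner N M \<Phi> Y" if "\<Phi> \<in> Cset" for \<Phi>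
  proof -
    define t where "t = Re (trace N (fam_sum M \<Phi>))"
    have PhiCG: "\<Phi> \<in> C_G N M" using that C_sub by blast
    have t0: "0 \<le> t" unfolding t_def by (rule CG_trace_nonneg[OF PhiCG])
    show ?thesis
    proof (cases "t = 0")
      case True
      have "\<Phi> m i j = 0" for m i j using CG_entry_bound[OF PhiCG, of m i j] True unfolding t_def by simp
      then show ?thesis by (simp add: fam_inner_zero)
    next
      case False
      then have tpos: "0 < t" using t0 by simp
      define \<Phi>' where "\<Phi>' = (\<lambda>m i k. of_real (c0/t) * \<Phi> m i k)"
      have "\<forall>x\<in>Cset. \<forall>r::real. 0 \<le> r \<longrightarrow> (\<lambda>m i j. of_real r * x m i j) \<in> Cset"
        using C_cone unfolding convex_cone_fams_def by blast
      moreover have "0 \<le> c0/t" using c0pos tpos by simp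
      ultimately have "\<Phi>' \<in> Cset" using that unfolding \<Phi>'_def by blast
      moreover have "Re (trace N (fam_sum M \<Phi>')) = c0"
        unfolding \<Phi>'_def Re_trace_scale using tpos unfolding t_def by simp
      ultimately have "\<Phi>' \<in> K1" unfolding K1_def by simp
      then have "0 \<le> fam_inner N M \<Phi>' Y" by (rule posK1)
      also have "fam_inner N M \<Phi>' Y = (c0/t) * fam_inner N M \<Phi> Y"
        unfolding \<Phi>'_def by (rule fam_inner_scale)
      finally show ?thesis using c0pos tpos by (simp add: zero_le_mult_iff zero_le_divide_iff)
    qed
  qed
  have YHer: "Y \<in> Her_fam N M"
    unfolding Her_fam_def famsupp_def Y_def using hchi Zherm by (auto intro: herm_diff)
  have Ydual: "Y \<in> dual_cone N M Cset"
    unfolding dual_cone_def using YHer posC by blast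
  have Sbound: "hs_inner N \<phi> chi + (\<Sum>j<J. q j * b j) \<le> r" if "\<phi> \<in> Sset" for \<phi>
    using hs_chi[of \<phi>] S_tr that \<alpha>_ge[OF that] c0pos unfolding \<gamma>_def by simp
  show ?thesis
    using hchi Ydual Sbound unfolding Y_def Z_def by blast
qed

lemma scal1: "(max 0 (e + s * d))\<^sup>2 \<le> (max 0 e)\<^sup>2 + 2 * s * (max 0 e) * d + s\<^sup>2 * d\<^sup>2" for e s d :: real
proof (cases "0 \<le> e")
  case True
  then have "(max 0 e)\<^sup>2 + 2 * s * (max 0 e) * d + s\<^sup>2 * d\<^sup>2 = (e + s * d)\<^sup>2" by (simp add: power2_eq_square algebra_simps)
  moreover have "(max 0 (e + s * d))\<^sup>2 \<le> (e + s * d)\<^sup>2"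
    by (cases "0 \<le> e + s * d") (simp_all add: max_def)
  ultimately show ?thesis by simp
next
  case False
  then have m0: "max 0 e = 0" by simp
  show ?thesis
  proof (cases "0 \<le> e + s * d")
    case True
    then have "(e + s * d)\<^sup>2 \<le> (s * d)\<^sup>2" using False
      by (intro power_mono) auto
    then show ?thesis using True m0 by (simp add: power_mult_distrib)
  next
    case False
    then show ?thesis using m0 by (simp add: max_def)
  qed
qed

lemma scal2:
  fixes G D :: real
  assumes "\<And>s. 0 < s \<Longrightarrow> s \<le> 1 \<Longrightarrow> 0 \<le> 2 * s * G + s\<^sup>2 * D"
  shows "0 \<le> G"
proof (rule ccontr)
  assume "\<not> 0 \<le> G"
  then have G: "G < 0" by simp
  define s where "s = min 1 (- G / (\<bar>D\<bar> + 1))"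
  have s0: "0 < s" unfolding s_def using G by (simp add: field_simps)
  have s1: "s \<le> 1" unfolding s_def by simp
  have "s * (\<bar>D\<bar> + 1) \<le> - G" unfolding s_def
    by (smt (verit) G abs_ge_zero divide_pos_pos min.cobounded2 mult_le_cancel_right_pos nonzero_eq_divide_eq)
  then have "s * \<bar>D\<bar> < - G" using s0 by (simp add: algebra_simps)
  then have "s * (s * \<bar>D\<bar>) < s * (- G)" using mult_strict_left_mono[OF _ s0] by blast
  moreover have "s\<^sup>2 * D \<le> s * (s * \<bar>D\<bar>)" by (simp add: power2_eq_square mult.assoc abs_ge_self mult_left_mono s0 less_imp_le)
  ultimately have "2 * s * G + s\<^sup>2 * D < s * G" by (simp add: algebra_simps)
  also have "\<dots> < 0" using s0 G by (simp add: mult_pos_neg)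
  finally show False using assms[OF s0 s1] by simp
qed

lemma cmod_comb: "(cmod (A + of_real s * D))\<^sup>2 = (cmod A)\<^sup>2 + 2 * s * Re (cnj A * D) + s\<^sup>2 * (cmod D)\<^sup>2"
  unfolding cmod_power2 by (simp add: power2_eq_square algebra_simps)

lemma min_grad:
  fixes U :: "'x \<Rightarrow> op" and e :: "nat \<Rightarrow> 'x \<Rightarrow> real" and p :: "'x \<Rightarrow> real"
    and F :: "'x \<Rightarrow> real" and cb :: "real \<Rightarrow> 'x \<Rightarrow> 'x"
  assumes xs_in: "\<And>s. 0 < s \<Longrightarrow> s \<le> 1 \<Longrightarrow> cb s x \<in> X"
    and U_lin: "\<And>s i k. U (cb s x) i k = U x0 i k + of_real s * (U x i k - U x0 i k)"
    and e_lin: "\<And>s j. e j (cb s x) = e j x0 + s * (e j x - e j x0)"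
    and p_lin: "\<And>s. p (cb s x) = p x0 + s * (p x - p x0)"
    and min: "\<And>y. y \<in> X \<Longrightarrow> F x0 \<le> F y"
    and F_def: "\<And>y. F y = (\<Sum>i<N. \<Sum>k<N. (cmod (U y i k))\<^sup>2) + (\<Sum>j<J. (max 0 (e j y))\<^sup>2) + (max 0 (r - p y))\<^sup>2"
  shows "0 \<le> (\<Sum>i<N. \<Sum>k<N. Re (cnj (U x0 i k) * (U x i k - U x0 i k)))
             + (\<Sum>j<J. max 0 (e j x0) * (e j x - e j x0)) - max 0 (r - p x0) * (p x - p x0)"
    (is "0 \<le> ?G")
proof (rule scal2)
  define D where "D = (\<Sum>i<N. \<Sum>k<N. (cmod (U x i k - U x0 i k))\<^sup>2) + (\<Sum>j<J. (e j x - e j x0)\<^sup>2) + (p x - p x0)\<^sup>2"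
  fix s :: real assume s0: "0 < s" and s1: "s \<le> 1"
  have t1: "(\<Sum>i<N. \<Sum>k<N. (cmod (U (cb s x) i k))\<^sup>2)
      = (\<Sum>i<N. \<Sum>k<N. (cmod (U x0 i k))\<^sup>2) + 2 * s * (\<Sum>i<N. \<Sum>k<N. Re (cnj (U x0 i k) * (U x i k - U x0 i k)))
        + s\<^sup>2 * (\<Sum>i<N. \<Sum>k<N. (cmod (U x i k - U x0 i k))\<^sup>2)"
  proof -
    have pt: "\<And>i k. (cmod (U (cb s x) i k))\<^sup>2 = (cmod (U x0 i k))\<^sup>2 + 2 * s * Re (cnj (U x0 i k) * (U x i k - U x0 i k))
        + s\<^sup>2 * (cmod (U x i k - U x0 i k))\<^sup>2"
      by (simp only: U_lin cmod_comb)
    show ?thesis by (simp only: pt sum.distrib sum_distrib_left[symmetric])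
  qed
  have t2: "(\<Sum>j<J. (max 0 (e j (cb s x)))\<^sup>2)
      \<le> (\<Sum>j<J. (max 0 (e j x0))\<^sup>2) + 2 * s * (\<Sum>j<J. max 0 (e j x0) * (e j x - e j x0))
        + s\<^sup>2 * (\<Sum>j<J. (e j x - e j x0)\<^sup>2)"
  proof -
    have "(\<Sum>j<J. (max 0 (e j (cb s x)))\<^sup>2) \<le> (\<Sum>j<J. (max 0 (e j x0))\<^sup>2 + 2 * s * (max 0 (e j x0)) * (e j x - e j x0) + s\<^sup>2 * (e j x - e j x0)\<^sup>2)"
      by (rule sum_mono) (simp only: e_lin scal1)
    also have "\<dots> = (\<Sum>j<J. (max 0 (e j x0))\<^sup>2) + 2 * s * (\<Sum>j<J. max 0 (e j x0) * (e j x - e j x0))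
        + s\<^sup>2 * (\<Sum>j<J. (e j x - e j x0)\<^sup>2)"
      by (simp add: sum.distrib sum_distrib_left mult.assoc)
    finally show ?thesis .
  qed
  have t3: "(max 0 (r - p (cb s x)))\<^sup>2 \<le> (max 0 (r - p x0))\<^sup>2 + 2 * s * (max 0 (r - p x0)) * (- (p x - p x0)) + s\<^sup>2 * (p x - p x0)\<^sup>2"
  proof -
    have e: "r - p (cb s x) = (r - p x0) + s * (- (p x - p x0))" by (simp add: p_lin algebra_simps)
    have sq: "(- (p x - p x0))\<^sup>2 = (p x - p x0)\<^sup>2" by (rule power2_minus)
    show ?thesis unfolding e using scal1[of "r - p x0" s "- (p x - p x0)"] unfolding sq .
  qed
  have "F (cb s x) \<le> F x0 + 2 * s * ?G + s\<^sup>2 * D"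
    unfolding F_def[of "cb s x"] F_def[of x0] D_def using t1 t2 t3 by (simp add: algebra_simps)
  moreover have "F x0 \<le> F (cb s x)" using min xs_in[OF s0 s1] by blast
  ultimately show "0 \<le> 2 * s * ?G + s\<^sup>2 * D" by simp
qed

lemma fam_sum_supported:
  assumes "\<Phi> \<in> C_G N M" "N \<le> i \<or> N \<le> k" shows "fam_sum M \<Phi> i k = 0"
proof -
  have "\<Phi> m i k = 0" if "m < M" for m
    using psd_supp[OF CG_psd[OF assms(1) that]] assms(2) unfolding supported_def by blast
  then show ?thesis unfolding fam_sum_def by simp
qed

lemma herm_fam_sum: assumes "\<Phi> \<in> C_G N M" shows "herm N (fam_sum M \<Phi>)"
proof -
  have "herm N (\<lambda>i k. \<Sum>m\<in>{..<M}. \<Phi> m i k)"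
    by (rule herm_sum) (use psd_herm CG_psd[OF assms] in auto)
  then show ?thesis unfolding fam_sum_def .
qed

lemma trace_as_fam_inner: "Re (trace N (fam_sum M \<Phi>)) = fam_inner N M \<Phi> (\<lambda>m. ident N)"
  by (simp add: hs_ident[symmetric] hs_fam_sum fam_inner_def)

lemma comb_eq: "of_real s * (x::complex) + of_real (1 - s) * y = y + of_real s * (x - y)"
  by (simp add: algebra_simps)

lemma step1:
  fixes N M J :: nat and c :: "nat \<Rightarrow> op" and a :: "nat \<Rightarrow> nat \<Rightarrow> op" and b :: "nat \<Rightarrow> real"
    and Cset :: "(nat \<Rightarrow> op) set" and Sset :: "op set" and c0 r :: real
  assumes C_sub: "Cset \<subseteq> C_G N M" and C_closed: "closed Cset" and C_cone: "convex_cone_fams Cset"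
    and S_closed: "closed Sset" and S_conv: "convex_ops Sset"
    and S_props: "\<forall>\<phi>\<in>Sset. Re (trace N \<phi>) = c0 \<and> herm N \<phi> \<and> (\<forall>i j. cmod (\<phi> i j) \<le> c0)"
    and c0pos: "0 < c0"
    and K1ne: "\<exists>\<Phi>\<in>Cset. Re (trace N (fam_sum M \<Phi>)) = c0"
    and Sne: "Sset \<noteq> {}"
    and feas: "\<forall>\<Phi>\<in>Cset. fam_sum M \<Phi> \<in> Sset \<longrightarrow> (\<forall>j<J. fam_inner N M \<Phi> (a j) - b j \<le> 0) \<longrightarrow> fam_inner N M \<Phi> c < r"
  shows "\<exists>chi1 q. herm N chi1 \<and> (\<forall>j<J. 0 \<le> q j) \<and> (\<forall>j\<ge>J. q j = 0) \<and>
     (\<forall>\<Phi>\<in>Cset. Re (trace N (fam_sum M \<Phi>)) = c0 \<longrightarrow> (\<forall>\<phi>\<in>Sset.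
        hs_inner N \<phi> chi1 - r \<le> hs_inner N (fam_sum M \<Phi>) chi1 + (\<Sum>j<J. q j * (fam_inner N M \<Phi> (a j) - b j)) - fam_inner N M \<Phi> c))"
proof -
  define \<eta> where "\<eta> = (\<lambda>j \<Phi>. fam_inner N M \<Phi> (a j) - b j)"
  define P where "P = (\<lambda>\<Phi>. fam_inner N M \<Phi> c)"
  define K1 where "K1 = {\<Phi>\<in>Cset. Re (trace N (fam_sum M \<Phi>)) = c0}"
  define X where "X = K1 \<times> Sset"
  define U where "U = (\<lambda>x::(nat \<Rightarrow> op) \<times> op. \<lambda>i k. fam_sum M (fst x) i k - snd x i k)"
  define F where "F = (\<lambda>x. (\<Sum>i<N. \<Sum>k<N. (cmod (U x i k))\<^sup>2) + (\<Sum>j<J. (max 0 (\<eta> j (fst x)))\<^sup>2) + (max 0 (r - P (fst x)))\<^sup>2)"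
  have K1closed: "closed K1"
    unfolding K1_def by (rule continuous_closed_preimage_constant[OF cont_trace_fam_sum[OF continuous_on_id] C_closed])
  have K1box: "K1 \<subseteq> {\<Phi>. \<forall>m i j. cmod (\<Phi> m i j) \<le> c0}"
    unfolding K1_def using CG_entry_bound C_sub by fastforce
  have K1comp: "compact K1" by (rule compact_bounded_closed[OF compact_fam_box K1closed K1box])
  have Scomp: "compact Sset"
    by (rule compact_bounded_closed[OF compact_op_box S_closed]) (use S_props in auto)
  have Xcomp: "compact X" unfolding X_def by (rule compact_Times[OF K1comp Scomp])
  have K1ne': "K1 \<noteq> {}" using K1ne unfolding K1_def by blast
  have Xne: "X \<noteq> {}" unfolding X_def using K1ne' Sne by blast
  have cfst: "continuous_on X (\<lambda>x. fst x)" by (intro continuous_on_fst continuous_on_id)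
  have csnd: "continuous_on X (\<lambda>x. snd x)" by (intro continuous_on_snd continuous_on_id)
  have cU: "continuous_on X (\<lambda>x. U x i k)" for i k
  proof -
    have h1: "\<And>m. continuous_on X (\<lambda>x. fst x m i k)" using cont_app3[OF cfst] .
    have h2: "continuous_on X (\<lambda>x. snd x i k)" using cont_app2[OF csnd] .
    show ?thesis unfolding U_def fam_sum_def by (intro continuous_on_diff continuous_on_sum h1 h2)
  qed
  have Fcont: "continuous_on X F"
    unfolding F_def \<eta>_def P_def
    by (intro continuous_on_add continuous_on_sum continuous_on_power continuous_on_norm cU
        continuous_on_max continuous_on_const continuous_on_diff cont_fam_inner cfst)
  obtain x0 where x0X: "x0 \<in> X" and x0min: "\<And>y. y \<in> X \<Longrightarrow> F x0 \<le> F y"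
    using continuous_attains_inf[OF Xcomp Xne Fcont] by blast
  define \<Phi>0 where "\<Phi>0 = fst x0"
  define \<phi>0 where "\<phi>0 = snd x0"
  have Phi0K1: "\<Phi>0 \<in> K1" and phi0S: "\<phi>0 \<in> Sset" using x0X unfolding X_def \<Phi>0_def \<phi>0_def by auto
  have Phi0C: "\<Phi>0 \<in> Cset" using Phi0K1 unfolding K1_def by simp
  have Phi0CG: "\<Phi>0 \<in> C_G N M" using Phi0C C_sub by blast
  have Fpos: "0 < F x0"
  proof (rule ccontr)
    assume "\<not> 0 < F x0"
    then have F0: "F x0 \<le> 0" by simp
    have n1: "0 \<le> (\<Sum>i<N. \<Sum>k<N. (cmod (U x0 i k))\<^sup>2)" by (intro sum_nonneg) simp
    have n2: "0 \<le> (\<Sum>j<J. (max 0 (\<eta> j \<Phi>0))\<^sup>2)" by (intro sum_nonneg) simp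
    have n3: "0 \<le> (max 0 (r - P \<Phi>0))\<^sup>2" by simp
    have z1: "(\<Sum>i<N. \<Sum>k<N. (cmod (U x0 i k))\<^sup>2) = 0" and z2: "(\<Sum>j<J. (max 0 (\<eta> j \<Phi>0))\<^sup>2) = 0"
      and z3: "(max 0 (r - P \<Phi>0))\<^sup>2 = 0"
      using F0 n1 n2 n3 unfolding F_def \<Phi>0_def by linarith+
    have "U x0 i k = 0" if "i < N" "k < N" for i k
    proof -
      have "\<forall>i\<in>{..<N}. (\<Sum>k<N. (cmod (U x0 i k))\<^sup>2) = 0"
        using z1 by (subst sum_nonneg_eq_0_iff[symmetric]) (auto intro: sum_nonneg)
      then have "(\<Sum>k<N. (cmod (U x0 i k))\<^sup>2) = 0" using that by blast
      then have "\<forall>k\<in>{..<N}. (cmod (U x0 i k))\<^sup>2 = 0"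
        by (subst sum_nonneg_eq_0_iff[symmetric]) auto
      then show ?thesis using that by simp
    qed
    then have eqS: "fam_sum M \<Phi>0 = \<phi>0"
    proof -
      assume h: "\<And>i k. i < N \<Longrightarrow> k < N \<Longrightarrow> U x0 i k = 0"
      have "fam_sum M \<Phi>0 i k = \<phi>0 i k" for i k
      proof (cases "i < N \<and> k < N")
        case True then show ?thesis using h[of i k] unfolding U_def \<Phi>0_def \<phi>0_def by simp
      next
        case False
        have "supported N \<phi>0" using S_props phi0S unfolding herm_def by blast
        then have "\<phi>0 i k = 0" using False unfolding supported_def by auto
        moreover have "fam_sum M \<Phi>0 i k = 0" using fam_sum_supported[OF Phi0CG] False by auto
        ultimately show ?thesis by simp
      qed
      then show ?thesis by (intro ext)
    qed
    have "\<forall>j\<in>{..<J}. (max 0 (\<eta> j \<Phi>0))\<^sup>2 = 0"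
      using z2 by (subst sum_nonneg_eq_0_iff[symmetric]) auto
    then have "\<forall>j<J. max 0 (\<eta> j \<Phi>0) = 0" by auto
    then have etaneg: "\<forall>j<J. \<eta> j \<Phi>0 \<le> 0" by (metis max.cobounded2)
    have "r \<le> P \<Phi>0" using z3 by auto
    moreover have "P \<Phi>0 < r" using feas Phi0C eqS phi0S etaneg unfolding \<eta>_def P_def by auto
    ultimately show False by simp
  qed
  define lam where "lam = (\<lambda>j. max 0 (\<eta> j \<Phi>0))"
  define \<mu> where "\<mu> = max 0 (r - P \<Phi>0)"
  define U0 where "U0 = U x0"
  define cb where "cb = (\<lambda>s (x::(nat\<Rightarrow>op)\<times>op). ((\<lambda>m i k. \<Phi>0 m i k + of_real s * (fst x m i k - \<Phi>0 m i k)),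
        (\<lambda>i k. \<phi>0 i k + of_real s * (snd x i k - \<phi>0 i k))))"
  have x0eq: "x0 = (\<Phi>0, \<phi>0)" unfolding \<Phi>0_def \<phi>0_def by simp
  have grad: "0 \<le> (\<Sum>i<N. \<Sum>k<N. Re (cnj (U0 i k) * (U (\<Phi>,\<phi>) i k - U0 i k)))
       + (\<Sum>j<J. lam j * (\<eta> j \<Phi> - \<eta> j \<Phi>0)) - \<mu> * (P \<Phi> - P \<Phi>0)"
    if PhiK1: "\<Phi> \<in> K1" and phiS: "\<phi> \<in> Sset" for \<Phi> \<phi>
  proof -
    have xs_in: "cb s (\<Phi>,\<phi>) \<in> X" if s0: "0 < s" and s1: "s \<le> 1" for s
    proof -
      have PhiC: "\<Phi> \<in> Cset" using PhiK1 unfolding K1_def by simp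
      have cf: "\<forall>x\<in>Cset. \<forall>y\<in>Cset. \<forall>u::real. 0 \<le> u \<and> u \<le> 1 \<longrightarrow>
          (\<lambda>m i j. of_real u * x m i j + of_real (1 - u) * y m i j) \<in> Cset"
        using C_cone unfolding convex_cone_fams_def convex_fams_def by blast
      have "(\<lambda>m i j. of_real s * \<Phi> m i j + of_real (1 - s) * \<Phi>0 m i j) \<in> Cset"
        using cf PhiC Phi0C s0 s1 by simp
      moreover have "(\<lambda>m i j. of_real s * \<Phi> m i j + of_real (1 - s) * \<Phi>0 m i j) = fst (cb s (\<Phi>,\<phi>))"
        unfolding cb_def fst_conv by (intro ext) (rule comb_eq)
      ultimately have c1: "fst (cb s (\<Phi>,\<phi>)) \<in> Cset" by simp
      have tr1: "fam_inner N M \<Phi> (\<lambda>m. ident N) = c0" and tr0: "fam_inner N M \<Phi>0 (\<lambda>m. ident N) = c0"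
        using PhiK1 Phi0K1 unfolding K1_def trace_as_fam_inner by simp_all
      have "Re (trace N (fam_sum M (fst (cb s (\<Phi>,\<phi>))))) = c0"
        unfolding trace_as_fam_inner cb_def fst_conv fam_inner_comb tr1 tr0 by simp
      then have c2: "fst (cb s (\<Phi>,\<phi>)) \<in> K1" using c1 unfolding K1_def by simp
      have sf: "\<forall>x\<in>Sset. \<forall>y\<in>Sset. \<forall>u::real. 0 \<le> u \<and> u \<le> 1 \<longrightarrow>
          (\<lambda>i j. of_real u * x i j + of_real (1 - u) * y i j) \<in> Sset"
        using S_conv unfolding convex_ops_def by blast
      have "(\<lambda>i j. of_real s * \<phi> i j + of_real (1 - s) * \<phi>0 i j) \<in> Sset"
        using sf phiS phi0S s0 s1 by simp
      moreover have "(\<lambda>i j. of_real s * \<phi> i j + of_real (1 - s) * \<phi>0 i j) = snd (cb s (\<Phi>,\<phi>))"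
        unfolding cb_def snd_conv by (intro ext) (rule comb_eq)
      ultimately have c3: "snd (cb s (\<Phi>,\<phi>)) \<in> Sset" by simp
      show ?thesis unfolding X_def using c2 c3 by (simp add: mem_Times_iff)
    qed
    have U_lin: "U (cb s (\<Phi>,\<phi>)) i k = U x0 i k + of_real s * (U (\<Phi>,\<phi>) i k - U x0 i k)" for s i k
    proof -
      have "(\<Sum>m<M. \<Phi>0 m i k + of_real s * (\<Phi> m i k - \<Phi>0 m i k))
          = (\<Sum>m<M. \<Phi>0 m i k) + of_real s * ((\<Sum>m<M. \<Phi> m i k) - (\<Sum>m<M. \<Phi>0 m i k))"
        by (simp add: sum.distrib sum_distrib_left sum_subtractf right_diff_distrib)
      then show ?thesis unfolding U_def cb_def x0eq fam_sum_def fst_conv snd_conv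
        by (simp add: algebra_simps)
    qed
    have e_lin: "\<eta> j (fst (cb s (\<Phi>,\<phi>))) = \<eta> j (fst x0) + s * (\<eta> j (fst (\<Phi>,\<phi>)) - \<eta> j (fst x0))" for s j
      unfolding \<eta>_def cb_def x0eq fst_conv fam_inner_comb by (simp add: algebra_simps)
    have p_lin: "P (fst (cb s (\<Phi>,\<phi>))) = P (fst x0) + s * (P (fst (\<Phi>,\<phi>)) - P (fst x0))" for s
      unfolding P_def cb_def x0eq fst_conv fam_inner_comb by (simp add: algebra_simps)
    have "0 \<le> (\<Sum>i<N. \<Sum>k<N. Re (cnj (U x0 i k) * (U (\<Phi>,\<phi>) i k - U x0 i k)))
             + (\<Sum>j<J. max 0 (\<eta> j (fst x0)) * (\<eta> j (fst (\<Phi>,\<phi>)) - \<eta> j (fst x0)))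
             - max 0 (r - P (fst x0)) * (P (fst (\<Phi>,\<phi>)) - P (fst x0))"
      by (rule min_grad[where X=X and F=F and cb=cb and e="\<lambda>j y. \<eta> j (fst y)" and p="\<lambda>y. P (fst y)",
            OF xs_in U_lin e_lin p_lin x0min]) (simp_all add: F_def)
    then show ?thesis unfolding U0_def lam_def \<mu>_def \<Phi>0_def by simp
  qed
  have phi0herm: "herm N \<phi>0" using S_props phi0S by blast
  have U0eq: "U0 = (\<lambda>i k. fam_sum M \<Phi>0 i k - \<phi>0 i k)" unfolding U0_def U_def \<Phi>0_def \<phi>0_def by simp
  have U0herm: "herm N U0" unfolding U0eq by (rule herm_diff[OF herm_fam_sum[OF Phi0CG] phi0herm])
  define nrm where "nrm = (\<Sum>i<N. \<Sum>k<N. (cmod (U0 i k))\<^sup>2)"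
  have Fx0: "F x0 = nrm + (\<Sum>j<J. (lam j)\<^sup>2) + \<mu>\<^sup>2"
    unfolding F_def nrm_def lam_def \<mu>_def U0_def \<Phi>0_def by simp
  have maxsq: "\<And>e::real. max 0 e * e = (max 0 e)\<^sup>2" by (simp add: max_def power2_eq_square)
  have key: "F x0 - \<mu> * r \<le> hs_inner N (fam_sum M \<Phi>) U0 - hs_inner N \<phi> U0 + (\<Sum>j<J. lam j * \<eta> j \<Phi>) - \<mu> * P \<Phi>"
    if PhiK1: "\<Phi> \<in> K1" and phiS: "\<phi> \<in> Sset" for \<Phi> \<phi>
  proof -
    have g: "0 \<le> (\<Sum>i<N. \<Sum>k<N. Re (cnj (U0 i k) * (U (\<Phi>,\<phi>) i k - U0 i k)))
       + (\<Sum>j<J. lam j * (\<eta> j \<Phi> - \<eta> j \<Phi>0)) - \<mu> * (P \<Phi> - P \<Phi>0)" by (rule grad[OF PhiK1 phiS])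
    have r1: "(\<Sum>i<N. \<Sum>k<N. Re (cnj (U0 i k) * (U (\<Phi>,\<phi>) i k - U0 i k)))
        = hs_inner N (fam_sum M \<Phi>) U0 - hs_inner N \<phi> U0 - nrm"
    proof -
      have "(\<Sum>i<N. \<Sum>k<N. Re (cnj (U0 i k) * (U (\<Phi>,\<phi>) i k - U0 i k)))
          = hs_inner N (\<lambda>i k. U (\<Phi>,\<phi>) i k - U0 i k) U0"
        by (rule hs_herm_expand[OF U0herm, symmetric])
      also have "\<dots> = hs_inner N (U (\<Phi>,\<phi>)) U0 - hs_inner N U0 U0" by (rule hs_diff_left)
      also have "hs_inner N (U (\<Phi>,\<phi>)) U0 = hs_inner N (fam_sum M \<Phi>) U0 - hs_inner N \<phi> U0"
      proof -
        have "U (\<Phi>,\<phi>) = (\<lambda>i k. fam_sum M \<Phi> i k - \<phi> i k)" unfolding U_def by simp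
        then show ?thesis using hs_diff_left[of N "fam_sum M \<Phi>" \<phi> U0] by simp
      qed
      also have "hs_inner N U0 U0 = nrm" unfolding nrm_def by (rule hs_self[OF U0herm])
      finally show ?thesis .
    qed
    have r2: "(\<Sum>j<J. lam j * (\<eta> j \<Phi> - \<eta> j \<Phi>0)) = (\<Sum>j<J. lam j * \<eta> j \<Phi>) - (\<Sum>j<J. (lam j)\<^sup>2)"
    proof -
      have "\<And>j. lam j * (\<eta> j \<Phi> - \<eta> j \<Phi>0) = lam j * \<eta> j \<Phi> - (lam j)\<^sup>2"
        unfolding lam_def using maxsq by (simp add: right_diff_distrib)
      then show ?thesis by (simp add: sum_subtractf)
    qed
    have r3: "\<mu> * (P \<Phi> - P \<Phi>0) = \<mu> * P \<Phi> - \<mu> * r + \<mu>\<^sup>2"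
    proof -
      have "\<mu> * (r - P \<Phi>0) = \<mu>\<^sup>2" unfolding \<mu>_def by (rule maxsq)
      then show ?thesis by (simp add: algebra_simps)
    qed
    show ?thesis using g r1 r2 r3 Fx0 by linarith
  qed
  have Pcont: "continuous_on K1 P" unfolding P_def by (rule cont_fam_inner[OF continuous_on_id])
  obtain xm where "xm \<in> K1" and xm: "\<forall>y\<in>K1. P y \<le> P xm"
    using continuous_attains_sup[OF K1comp K1ne' Pcont] by blast
  define B0 where "B0 = P xm"
  have B0: "\<And>\<Phi>. \<Phi> \<in> K1 \<Longrightarrow> P \<Phi> \<le> B0" using xm unfolding B0_def by blast
  have mu0: "0 \<le> \<mu>" unfolding \<mu>_def by simp
  obtain \<kappa> where k0: "0 \<le> \<kappa>" and kH: "\<And>\<Phi>. \<Phi> \<in> K1 \<Longrightarrow> 0 \<le> \<kappa> * F x0 + (\<kappa> * \<mu> - 1) * (P \<Phi> - r)"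
  proof (cases "0 < \<mu>")
    case True
    define \<kappa> where "\<kappa> = 1 / \<mu>"
    have "\<kappa> * \<mu> = 1" unfolding \<kappa>_def using True by simp
    moreover have "0 \<le> \<kappa> * F x0" unfolding \<kappa>_def using True Fpos by simp
    moreover have "0 \<le> \<kappa>" unfolding \<kappa>_def using True by simp
    ultimately show ?thesis using that[of \<kappa>] by simp
  next
    case False
    then have m0: "\<mu> = 0" using mu0 by simp
    define \<kappa> where "\<kappa> = max 0 ((B0 - r) / F x0)"
    have "B0 - r \<le> \<kappa> * F x0"
    proof (cases "(B0 - r) / F x0 \<le> 0")
      case True
      then have "B0 - r \<le> 0" using Fpos by (simp add: divide_le_0_iff)
      then show ?thesis unfolding \<kappa>_def using True by simp
    next
      case False
      then show ?thesis unfolding \<kappa>_def using Fpos by simp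
    qed
    then have "\<And>\<Phi>. \<Phi> \<in> K1 \<Longrightarrow> 0 \<le> \<kappa> * F x0 + (\<kappa> * \<mu> - 1) * (P \<Phi> - r)"
      using B0 m0 by fastforce
    moreover have "0 \<le> \<kappa>" unfolding \<kappa>_def by simp
    ultimately show ?thesis using that[of \<kappa>] by blast
  qed
  define chi1 where "chi1 = (\<lambda>i k. of_real \<kappa> * U0 i k)"
  define q where "q = (\<lambda>j. if j < J then \<kappa> * lam j else 0)"
  have h1: "herm N chi1" unfolding chi1_def by (rule herm_scale[OF U0herm])
  have qpos: "\<forall>j<J. 0 \<le> q j" unfolding q_def lam_def using k0 by simp
  have qzero: "\<forall>j\<ge>J. q j = 0" unfolding q_def by simp
  have ineq: "hs_inner N \<phi> chi1 - r \<le> hs_inner N (fam_sum M \<Phi>) chi1 + (\<Sum>j<J. q j * (fam_inner N M \<Phi> (a j) - b j)) - fam_inner N M \<Phi> c"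
    if PhiC: "\<Phi> \<in> Cset" and trc: "Re (trace N (fam_sum M \<Phi>)) = c0" and phiS: "\<phi> \<in> Sset" for \<Phi> \<phi>
  proof -
    have PhiK1: "\<Phi> \<in> K1" unfolding K1_def using PhiC trc by simp
    define hS where "hS = hs_inner N (fam_sum M \<Phi>) U0"
    define hp where "hp = hs_inner N \<phi> U0"
    define SL where "SL = (\<Sum>j<J. lam j * \<eta> j \<Phi>)"
    have k1: "F x0 - \<mu> * r \<le> hS - hp + SL - \<mu> * P \<Phi>" using key[OF PhiK1 phiS] unfolding hS_def hp_def SL_def .
    have k2: "\<kappa> * (F x0 - \<mu> * r) \<le> \<kappa> * (hS - hp + SL - \<mu> * P \<Phi>)" by (rule mult_left_mono[OF k1 k0])
    have k3: "0 \<le> \<kappa> * F x0 + (\<kappa> * \<mu> - 1) * (P \<Phi> - r)" by (rule kH[OF PhiK1])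
    have e1: "hs_inner N \<phi> chi1 = \<kappa> * hp" unfolding chi1_def hp_def by (rule hs_scale_right)
    have e2: "hs_inner N (fam_sum M \<Phi>) chi1 = \<kappa> * hS" unfolding chi1_def hS_def by (rule hs_scale_right)
    have e3: "(\<Sum>j<J. q j * (fam_inner N M \<Phi> (a j) - b j)) = \<kappa> * SL"
    proof -
      have "(\<Sum>j<J. q j * (fam_inner N M \<Phi> (a j) - b j)) = (\<Sum>j<J. \<kappa> * (lam j * \<eta> j \<Phi>))"
        by (rule sum.cong[OF refl]) (simp add: q_def \<eta>_def)
      then show ?thesis unfolding SL_def by (simp add: sum_distrib_left)
    qed
    have e4: "fam_inner N M \<Phi> c = P \<Phi>" unfolding P_def ..
    have x1: "\<kappa> * (F x0 - \<mu> * r) = \<kappa> * F x0 - \<kappa> * \<mu> * r" by (simp add: algebra_simps)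
    have x2: "\<kappa> * (hS - hp + SL - \<mu> * P \<Phi>) = \<kappa> * hS - \<kappa> * hp + \<kappa> * SL - \<kappa> * \<mu> * P \<Phi>"
      by (simp add: algebra_simps)
    have x3: "(\<kappa> * \<mu> - 1) * (P \<Phi> - r) = \<kappa> * \<mu> * P \<Phi> - \<kappa> * \<mu> * r - P \<Phi> + r"
      by (simp add: algebra_simps)
    show ?thesis unfolding e1 e2 e3 e4 using k2 k3 x1 x2 x3 by linarith
  qed
  show ?thesis using h1 qpos qzero ineq by blast
qed

lemma fam_z: "fam_inner N M \<Phi> (\<lambda>m i k. c m i k - (\<Sum>j<J. of_real (q j) * a j m i k))
   = fam_inner N M \<Phi> c - (\<Sum>j<J. q j * fam_inner N M \<Phi> (a j))"
proof -
  have "fam_inner N M \<Phi> (\<lambda>m i k. c m i k - (\<Sum>j<J. of_real (q j) * a j m i k))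
      = (\<Sum>m<M. hs_inner N (\<Phi> m) (c m) - (\<Sum>j<J. q j * hs_inner N (\<Phi> m) (a j m)))"
    unfolding fam_inner_def by (rule sum.cong[OF refl]) (rule hs_z)
  also have "\<dots> = fam_inner N M \<Phi> c - (\<Sum>j<J. q j * fam_inner N M \<Phi> (a j))"
    unfolding fam_inner_def by (simp add: sum_subtractf sum_distrib_left sum.swap[of _ "{..<M}"])
  finally show ?thesis .
qed

theorem theorem1:
  fixes T M J :: nat
    and v w :: "nat \<Rightarrow> nat"
    and c :: "nat \<Rightarrow> op" and a :: "nat \<Rightarrow> nat \<Rightarrow> op" and b :: "nat \<Rightarrow> real"
    and Tset Cset :: "(nat \<Rightarrow> op) set" and Sset :: "op set"
  defines "N \<equiv> dimH v w T"
  defines "\<eta> \<equiv> (\<lambda>j \<Phi>. fam_inner N M \<Phi> (\<lambda>m. a j m) - b j)"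
  defines "P \<equiv> (\<lambda>\<Phi>. fam_inner N M \<Phi> c)"
  defines "Pset \<equiv> {\<Phi> \<in> Tset. \<forall>j<J. \<eta> j \<Phi> \<le> 0}"
  defines "z \<equiv> (\<lambda>(q::nat \<Rightarrow> real) m. (\<lambda>i k. c m i k - (\<Sum>j<J. of_real (q j) * a j m i k)))"
  defines "Dset \<equiv> {(chi, q). herm N chi \<and> (\<forall>j<J. 0 \<le> q j) \<and> (\<forall>j\<ge>J. q j = 0) \<and>
                   (\<lambda>m. if m < M then (\<lambda>i k. chi i k - z q m i k) else (\<lambda>i k. 0))
                      \<in> dual_cone N M Cset}"
  defines "D \<equiv> (\<lambda>(chi, q). (SUP \<phi>\<in>Sset. ereal (hs_inner N \<phi> chi)) + ereal (\<Sum>j<J. q j * b j))"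
  assumes T_pos: "1 \<le> T" and M_ge: "2 \<le> M"
    and dims_pos: "\<forall>t\<in>{1..T}. 0 < v t \<and> 0 < w t"
    and c_herm: "\<forall>m<M. herm N (c m)"
    and a_herm: "\<forall>j<J. \<forall>m<M. herm N (a j m)"
    and T_ne: "Tset \<noteq> {}" and T_conv: "convex_fams Tset" and T_sub: "Tset \<subseteq> T_G T v w M"
    and P_closure: "closure Pset = {\<Phi> \<in> closure Tset. \<forall>j<J. \<eta> j \<Phi> \<le> 0}"
    and C_sub: "Cset \<subseteq> C_G N M" and C_closed: "closed Cset" and C_cone: "convex_cone_fams Cset"
    and S_sub: "Sset \<subseteq> S_G T v w" and S_closed: "closed Sset" and S_conv: "convex_ops Sset"
    and T_closure: "closure Tset = {\<Phi> \<in> Cset. fam_sum M \<Phi> \<in> Sset}"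
  shows "(SUP \<Phi>\<in>Pset. ereal (P \<Phi>)) = (INF d\<in>Dset. D d)"
proof -
  define c0 where "c0 = real (\<Prod>t\<in>{1..T}. w t)"
  have c0pos: "0 < c0"
  proof -
    have "0 < (\<Prod>t\<in>{1..T}. w t)" using dims_pos by (intro prod_pos) auto
    then show ?thesis unfolding c0_def by (simp del: of_nat_prod)
  qed
  have S_props: "\<forall>\<phi>\<in>Sset. Re (trace N \<phi>) = c0 \<and> herm N \<phi> \<and> (\<forall>i j. cmod (\<phi> i j) \<le> c0)"
  proof
    fix \<phi> assume "\<phi> \<in> Sset"
    then have pG: "\<phi> \<in> S_G T v w" using S_sub by blast
    show "Re (trace N \<phi>) = c0 \<and> herm N \<phi> \<and> (\<forall>i j. cmod (\<phi> i j) \<le> c0)"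
      using S_G_props[OF pG T_pos dims_pos] unfolding N_def c0_def by (simp del: of_nat_prod)
  qed
  obtain \<Phi>1 where "\<Phi>1 \<in> Tset" using T_ne by blast
  then have "\<Phi>1 \<in> closure Tset" using closure_subset by blast
  then have Phi1: "\<Phi>1 \<in> Cset" "fam_sum M \<Phi>1 \<in> Sset" using T_closure by auto
  have Sne: "Sset \<noteq> {}" using Phi1 by blast
  have K1ne: "\<exists>\<Phi>\<in>Cset. Re (trace N (fam_sum M \<Phi>)) = c0" using Phi1 S_props by blast
  have etaeq: "\<And>j \<Phi>. \<eta> j \<Phi> = fam_inner N M \<Phi> (a j) - b j" unfolding \<eta>_def by simp
  have zeq: "\<And>q m. z q m = (\<lambda>i k. c m i k - (\<Sum>j<J. of_real (q j) * a j m i k))" unfolding z_def by simp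
  have PZ: "fam_inner N M \<Phi> (z q) = P \<Phi> - (\<Sum>j<J. q j * fam_inner N M \<Phi> (a j))" for \<Phi> q
  proof -
    have "z q = (\<lambda>m i k. c m i k - (\<Sum>j<J. of_real (q j) * a j m i k))" using zeq by (intro ext) simp
    then show ?thesis unfolding P_def using fam_z by simp
  qed
  have weak: "ereal (P \<Phi>) \<le> D d" if PhiP: "\<Phi> \<in> Pset" and dD: "d \<in> Dset" for \<Phi> d
  proof -
    obtain chi q where d: "d = (chi, q)" by (cases d)
    have hchi: "herm N chi" and qpos: "\<forall>j<J. 0 \<le> q j"
      and Yd: "(\<lambda>m. if m < M then (\<lambda>i k. chi i k - z q m i k) else (\<lambda>i k. 0)) \<in> dual_cone N M Cset"
      using dD unfolding Dset_def d by auto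
    have PhiT: "\<Phi> \<in> Tset" and etaP: "\<forall>j<J. \<eta> j \<Phi> \<le> 0" using PhiP unfolding Pset_def by auto
    have "\<Phi> \<in> closure Tset" using PhiT closure_subset by blast
    then have PhiC: "\<Phi> \<in> Cset" and PhiS: "fam_sum M \<Phi> \<in> Sset" using T_closure by auto
    have "0 \<le> fam_inner N M \<Phi> (\<lambda>m. if m < M then (\<lambda>i k. chi i k - z q m i k) else (\<lambda>i k. 0))"
      using Yd PhiC unfolding dual_cone_def by blast
    also have "\<dots> = hs_inner N (fam_sum M \<Phi>) chi - fam_inner N M \<Phi> (z q)"
      by (rule fam_inner_Y)
    finally have i1: "P \<Phi> \<le> hs_inner N (fam_sum M \<Phi>) chi + (\<Sum>j<J. q j * fam_inner N M \<Phi> (a j))"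
      unfolding PZ by simp
    have "(\<Sum>j<J. q j * fam_inner N M \<Phi> (a j)) \<le> (\<Sum>j<J. q j * b j)"
    proof (rule sum_mono)
      fix j assume "j \<in> {..<J}"
      then have "fam_inner N M \<Phi> (a j) \<le> b j" "0 \<le> q j" using etaP qpos etaeq by auto
      then show "q j * fam_inner N M \<Phi> (a j) \<le> q j * b j" by (simp add: mult_left_mono)
    qed
    then have i2: "P \<Phi> \<le> hs_inner N (fam_sum M \<Phi>) chi + (\<Sum>j<J. q j * b j)" using i1 by linarith
    have "ereal (hs_inner N (fam_sum M \<Phi>) chi) \<le> (SUP \<phi>\<in>Sset. ereal (hs_inner N \<phi> chi))"
      using PhiS by (rule SUP_upper)
    then have a1: "ereal (hs_inner N (fam_sum M \<Phi>) chi) + ereal (\<Sum>j<J. q j * b j)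
        \<le> (SUP \<phi>\<in>Sset. ereal (hs_inner N \<phi> chi)) + ereal (\<Sum>j<J. q j * b j)"
      by (rule add_right_mono)
    have a2: "ereal (P \<Phi>) \<le> ereal (hs_inner N (fam_sum M \<Phi>) chi) + ereal (\<Sum>j<J. q j * b j)"
    proof -
      have "ereal (hs_inner N (fam_sum M \<Phi>) chi) + ereal (\<Sum>j<J. q j * b j) = ereal (hs_inner N (fam_sum M \<Phi>) chi + (\<Sum>j<J. q j * b j))"
        by simp
      then show ?thesis using i2 by simp
    qed
    have "D d = (SUP \<phi>\<in>Sset. ereal (hs_inner N \<phi> chi)) + ereal (\<Sum>j<J. q j * b j)"
      unfolding D_def d by simp
    then show ?thesis using order_trans[OF a2 a1] by simp
  qed
  have strong: "\<exists>d\<in>Dset. D d \<le> ereal r" if lt: "(SUP \<Phi>\<in>Pset. ereal (P \<Phi>)) < ereal r" for r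
  proof -
    obtain r0 where r0a: "(SUP \<Phi>\<in>Pset. ereal (P \<Phi>)) < ereal r0" and r0b: "ereal r0 < ereal r"
      using ereal_dense2[OF lt] by blast
    have Pr0: "\<forall>\<Phi>\<in>Pset. P \<Phi> \<le> r0"
    proof
      fix \<Phi> assume "\<Phi> \<in> Pset"
      then have "ereal (P \<Phi>) \<le> (SUP \<Phi>\<in>Pset. ereal (P \<Phi>))" by (rule SUP_upper)
      then have "ereal (P \<Phi>) < ereal r0" using r0a by (rule order_le_less_trans)
      then show "P \<Phi> \<le> r0" by simp
    qed
    have Pcont: "continuous_on UNIV P" unfolding P_def by (rule cont_fam_inner[OF continuous_on_id])
    have "closed {\<Phi>. P \<Phi> \<le> r0}" by (rule closed_Collect_le[OF Pcont continuous_on_const])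
    then have clP: "closure Pset \<subseteq> {\<Phi>. P \<Phi> \<le> r0}" using Pr0 by (intro closure_minimal) auto
    have feas: "\<forall>\<Phi>\<in>Cset. fam_sum M \<Phi> \<in> Sset \<longrightarrow> (\<forall>j<J. fam_inner N M \<Phi> (a j) - b j \<le> 0) \<longrightarrow> fam_inner N M \<Phi> c < r"
    proof (intro ballI impI)
      fix \<Phi> assume PhiC: "\<Phi> \<in> Cset" and PhiS: "fam_sum M \<Phi> \<in> Sset" and eneg: "\<forall>j<J. fam_inner N M \<Phi> (a j) - b j \<le> 0"
      have "\<Phi> \<in> closure Tset" using T_closure PhiC PhiS by simp
      then have "\<Phi> \<in> closure Pset" using P_closure eneg etaeq by simp
      then have "P \<Phi> \<le> r0" using clP by blast
      then show "fam_inner N M \<Phi> c < r" using r0b unfolding P_def by simp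
    qed
    obtain chi1 q where h1: "herm N chi1" and qpos: "\<forall>j<J. 0 \<le> q j" and qzero: "\<forall>j\<ge>J. q j = 0"
      and ineq1: "\<forall>\<Phi>\<in>Cset. Re (trace N (fam_sum M \<Phi>)) = c0 \<longrightarrow> (\<forall>\<phi>\<in>Sset.
        hs_inner N \<phi> chi1 - r \<le> hs_inner N (fam_sum M \<Phi>) chi1 + (\<Sum>j<J. q j * (fam_inner N M \<Phi> (a j) - b j)) - fam_inner N M \<Phi> c)"
      using step1[OF C_sub C_closed C_cone S_closed S_conv S_props c0pos K1ne Sne feas] by blast
    have ineq2: "\<forall>\<Phi>\<in>Cset. Re (trace N (fam_sum M \<Phi>)) = c0 \<longrightarrow> (\<forall>\<phi>\<in>Sset.
      hs_inner N \<phi> chi1 + (\<Sum>j<J. q j * b j) - r \<le> hs_inner N (fam_sum M \<Phi>) chi1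
          - fam_inner N M \<Phi> (\<lambda>m i k. c m i k - (\<Sum>j<J. of_real (q j) * a j m i k)))"
    proof (intro ballI impI)
      fix \<Phi> \<phi> assume "\<Phi> \<in> Cset" "Re (trace N (fam_sum M \<Phi>)) = c0" "\<phi> \<in> Sset"
      then have i: "hs_inner N \<phi> chi1 - r \<le> hs_inner N (fam_sum M \<Phi>) chi1 + (\<Sum>j<J. q j * (fam_inner N M \<Phi> (a j) - b j)) - fam_inner N M \<Phi> c"
        using ineq1 by blast
      have s: "(\<Sum>j<J. q j * (fam_inner N M \<Phi> (a j) - b j)) = (\<Sum>j<J. q j * fam_inner N M \<Phi> (a j)) - (\<Sum>j<J. q j * b j)"
        by (simp add: right_diff_distrib sum_subtractf)
      show "hs_inner N \<phi> chi1 + (\<Sum>j<J. q j * b j) - r \<le> hs_inner N (fam_sum M \<Phi>) chi1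
          - fam_inner N M \<Phi> (\<lambda>m i k. c m i k - (\<Sum>j<J. of_real (q j) * a j m i k))"
        unfolding fam_z using i s by linarith
    qed
    obtain chi where hchi: "herm N chi"
      and Yd: "(\<lambda>m. if m < M then (\<lambda>i k. chi i k - (c m i k - (\<Sum>j<J. of_real (q j) * a j m i k))) else (\<lambda>i k. 0))
        \<in> dual_cone N M Cset" and Sb: "\<forall>\<phi>\<in>Sset. hs_inner N \<phi> chi + (\<Sum>j<J. q j * b j) \<le> r"
      using assemble[OF c_herm a_herm C_sub C_cone _ c0pos Sne K1ne h1 qpos qzero ineq2] S_props by blast
    have dD: "(chi, q) \<in> Dset" unfolding Dset_def z_def using hchi qpos qzero Yd by simp
    have "(SUP \<phi>\<in>Sset. ereal (hs_inner N \<phi> chi)) \<le> ereal (r - (\<Sum>j<J. q j * b j))"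
      by (rule SUP_least) (use Sb in \<open>simp add: algebra_simps\<close>)
    then have a: "(SUP \<phi>\<in>Sset. ereal (hs_inner N \<phi> chi)) + ereal (\<Sum>j<J. q j * b j) \<le> ereal (r - (\<Sum>j<J. q j * b j)) + ereal (\<Sum>j<J. q j * b j)"
      by (rule add_right_mono)
    have b: "ereal (r - (\<Sum>j<J. q j * b j)) + ereal (\<Sum>j<J. q j * b j) = ereal r" by simp
    have "D (chi, q) = (SUP \<phi>\<in>Sset. ereal (hs_inner N \<phi> chi)) + ereal (\<Sum>j<J. q j * b j)"
      unfolding D_def by simp
    then have "D (chi, q) \<le> ereal r" using a b by simp
    then show ?thesis using dD by blast
  qed
  show ?thesis
  proof (rule antisym)
    show "(SUP \<Phi>\<in>Pset. ereal (P \<Phi>)) \<le> (INF d\<in>Dset. D d)"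
      using weak by (auto intro!: SUP_least INF_greatest)
    show "(INF d\<in>Dset. D d) \<le> (SUP \<Phi>\<in>Pset. ereal (P \<Phi>))"
    proof (rule dense_ge)
      fix y assume y: "(SUP \<Phi>\<in>Pset. ereal (P \<Phi>)) < y"
      show "(INF d\<in>Dset. D d) \<le> y"
      proof (cases y)
        case (real r)
        obtain d where "d \<in> Dset" "D d \<le> ereal r" using strong y real by blast
        then show ?thesis using real by (meson INF_lower order_trans)
      next
        case PInf then show ?thesis by simp
      next
        case MInf then show ?thesis using y by simp
      qed
    qed
  qed
qed

end
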